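(* Let $\{\Theta_n\}_{n\ge0}$ be a family of lattice congruences on the weak orders $S_n$ that is both translational and insertional (an $\mathcal{H}$-family). Then the map $c$ embeds $(\mathbb{K}[Z^\Theta_\infty],\bullet_Z,\Delta_Z)$ as a sub Hopf algebra of the Malvenuto–Reutenauer Hopf algebra $(\mathbb{K}[S_\infty],\bullet_S,\Delta_S)$.
   Context: $S_n$: permutations of $[n]$ in one-line notation, with the right weak order (inclusion of sets of inverted value pairs), a lattice. $u\times v=u_1\cdots u_p(p+v_1)\cdots(p+v_q)$ for $u\in S_p,v\in S_q$. $\mathrm{st}(a_1,\dots,a_k)$ is the $u\in S_k$ with $u_i<u_j\iff a_i<a_j$. For $x\in S_{p+q}$, $x_{\bar p}:=u\times v$ with $u$ ($v$) the standardization of the subsequence of entries of $x$ in $[1,p]$ (in $[p+1,p+q]$). $\pi_\downarrow x$: minimum of the $\Theta_n$-class of $x$. Translational: $u\times v\equiv u'\times v'\pmod{\Theta_{p+q}}$ iff $u\equiv u'\pmod{\Theta_p}$ and $v\equiv v'\pmod{\Theta_q}$, for all $p,q$. Insertional: for every $p$-subset $Q\subseteq[p+q]$ and $\varphi_Q(u,v)$ the unique $x\in S_{p+q}$ with $\{x_1,..,x_p\}=Q$, $\mathrm{st}(x_1..x_p)=u$, $\mathrm{st}(x_{p+1}..x_{p+q})=v$: if $u\equiv u'$ mod $\Theta_p$ and $v\equiv v'$ mod $\Theta_q$ then $\varphi_Q(u,v)\equiv\varphi_Q(u',v')$ mod $\Theta_{p+q}$. $\mathbb{K}[S_\infty]=\bigoplus_n\mathbb{K}[S_n]$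 ($\mathbb{K}$ a field) with $u\bullet_S v=\sum_{x\in S_{p+q},x_{\bar p}=u\times v}x$ and $\Delta_S(x)=\sum_{p=0}^n\mathrm{st}(x_1..x_p)\otimes\mathrm{st}(x_{p+1}..x_n)$. $Z_n=\{x\in S_n:\pi_\downarrow x=x\}$, $\mathbb{K}[Z^\Theta_\infty]=\bigoplus_n\mathbb{K}[Z_n]$, $u\bullet_Z v=\sum_{x\in Z_{p+q},x_{\bar p}=u\times v}x$; $c$ maps $x\in Z_n$ to the sum of its class; $r$ fixes $x$ if $\pi_\downarrow x=x$ and kills it otherwise; $\Delta_Z=(r\otimes r)\circ\Delta_S\circ c$. *)

theory Defs
  imports Main
begin

text \<open>A permutation of [n] is the list of its values (one-line notation).\<close>
definition Sn :: "nat \<Rightarrow> nat list set" where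
  "Sn n = {xs. distinct xs \<and> set xs = {1..n}}"

definition inv_set :: "nat list \<Rightarrow> (nat \<times> nat) set" where
  "inv_set xs = {(a, b). a < b \<and> (\<exists>i j. i < j \<and> j < length xs \<and> xs ! i = b \<and> xs ! j = a)}"

definition weak_le :: "nat list \<Rightarrow> nat list \<Rightarrow> bool" where
  "weak_le x y \<longleftrightarrow> inv_set x \<subseteq> inv_set y"

definition wmeet :: "nat \<Rightarrow> nat list \<Rightarrow> nat list \<Rightarrow> nat list" where
  "wmeet n x y = (THE m. m \<in> Sn n \<and> weak_le m x \<and> weak_le m y \<and>
      (\<forall>z\<in>Sn n. weak_le z x \<and> weak_le z y \<longrightarrow> weak_le z m))"

definition wjoin :: "nat \<Rightarrow> nat list \<Rightarrow> nat list \<Rightarrow> nat list" where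
  "wjoin n x y = (THE m. m \<in> Sn n \<and> weak_le x m \<and> weak_le y m \<and>
      (\<forall>z\<in>Sn n. weak_le x z \<and> weak_le y z \<longrightarrow> weak_le m z))"

definition lattice_cong :: "nat \<Rightarrow> (nat list \<times> nat list) set \<Rightarrow> bool" where
  "lattice_cong n R \<longleftrightarrow> equiv (Sn n) R \<and>
     (\<forall>x y z. (x, y) \<in> R \<and> z \<in> Sn n \<longrightarrow>
        (wmeet n x z, wmeet n y z) \<in> R \<and> (wjoin n x z, wjoin n y z) \<in> R)"

definition st :: "nat list \<Rightarrow> nat list" where
  "st as = map (\<lambda>a. card {b \<in> set as. b \<le> a}) as"

definition shift_prod :: "nat list \<Rightarrow> nat list \<Rightarrow> nat list" where
  "shift_prod u v = u @ map (\<lambda>b. length u + b) v"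

definition bar :: "nat \<Rightarrow> nat list \<Rightarrow> nat list" where
  "bar p x = shift_prod (st (filter (\<lambda>a. a \<le> p) x)) (st (filter (\<lambda>a. p < a) x))"

definition phi :: "nat set \<Rightarrow> nat list \<Rightarrow> nat list \<Rightarrow> nat list" where
  "phi Q u v = (THE x. x \<in> Sn (length u + length v) \<and> set (take (length u) x) = Q \<and>
      st (take (length u) x) = u \<and> st (drop (length u) x) = v)"

definition translational :: "(nat \<Rightarrow> (nat list \<times> nat list) set) \<Rightarrow> bool" where
  "translational \<Theta> \<longleftrightarrow> (\<forall>p q u u' v v'. u \<in> Sn p \<longrightarrow> u' \<in> Sn p \<longrightarrow> v \<in> Sn q \<longrightarrow> v' \<in> Sn q \<longrightarrow>
     ((shift_prod u v, shift_prod u' v') \<in> \<Theta> (p + q) \<longleftrightarrow> (u, u') \<in> \<Theta> p \<and> (v, v') \<in> \<Theta> q))"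

definition insertional :: "(nat \<Rightarrow> (nat list \<times> nat list) set) \<Rightarrow> bool" where
  "insertional \<Theta> \<longleftrightarrow> (\<forall>p q Q u u' v v'. Q \<subseteq> {1..p+q} \<longrightarrow> card Q = p \<longrightarrow>
     u \<in> Sn p \<longrightarrow> u' \<in> Sn p \<longrightarrow> v \<in> Sn q \<longrightarrow> v' \<in> Sn q \<longrightarrow>
     (u, u') \<in> \<Theta> p \<longrightarrow> (v, v') \<in> \<Theta> q \<longrightarrow> (phi Q u v, phi Q u' v') \<in> \<Theta> (p + q))"

definition H_family :: "(nat \<Rightarrow> (nat list \<times> nat list) set) \<Rightarrow> bool" where
  "H_family \<Theta> \<longleftrightarrow> (\<forall>n. lattice_cong n (\<Theta> n)) \<and> translational \<Theta> \<and> insertional \<Theta>"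

definition pi_down :: "(nat \<Rightarrow> (nat list \<times> nat list) set) \<Rightarrow> nat list \<Rightarrow> nat list" where
  "pi_down \<Theta> x = (THE m. (m, x) \<in> \<Theta> (length x) \<and>
      (\<forall>y. (y, x) \<in> \<Theta> (length x) \<longrightarrow> weak_le m y))"

definition Zset :: "(nat \<Rightarrow> (nat list \<times> nat list) set) \<Rightarrow> nat list set" where
  "Zset \<Theta> = {x. x \<in> Sn (length x) \<and> pi_down \<Theta> x = x}"

text \<open>An element of K[S_inf] is a finitely supported coefficient function on
  permutations (of all sizes); tensors are finitely supported functions on pairs.\<close>

definition supp :: "('a \<Rightarrow> 'k::zero) \<Rightarrow> 'a set" where
  "supp f = {x. f x \<noteq> 0}"

definition KS :: "(nat list \<Rightarrow> 'k::field) set" where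
  "KS = {f. finite (supp f) \<and> (\<forall>x\<in>supp f. x \<in> Sn (length x))}"

definition KZ :: "(nat \<Rightarrow> (nat list \<times> nat list) set) \<Rightarrow> (nat list \<Rightarrow> 'k::field) set" where
  "KZ \<Theta> = {f. finite (supp f) \<and> supp f \<subseteq> Zset \<Theta>}"

definition unitK :: "nat list \<Rightarrow> 'k::field" where
  "unitK = (\<lambda>x. of_bool (x = []))"

definition counitK :: "(nat list \<Rightarrow> 'k::field) \<Rightarrow> 'k" where
  "counitK f = f []"

definition prodS_basis :: "nat list \<Rightarrow> nat list \<Rightarrow> nat list \<Rightarrow> 'k::field" where
  "prodS_basis u v x = of_bool (x \<in> Sn (length u + length v) \<and> bar (length u) x = shift_prod u v)"

definition mulS :: "(nat list \<Rightarrow> 'k::field) \<Rightarrow> (nat list \<Rightarrow> 'k) \<Rightarrow> nat list \<Rightarrow> 'k" where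
  "mulS f g = (\<lambda>x. \<Sum>u\<in>supp f. \<Sum>v\<in>supp g. f u * g v * prodS_basis u v x)"

definition coprodS_basis :: "nat list \<Rightarrow> nat list \<times> nat list \<Rightarrow> 'k::field" where
  "coprodS_basis x = (\<lambda>(a, b). of_bool (\<exists>p\<le>length x.
      a = st (take p x) \<and> b = st (drop p x)))"

definition DeltaS :: "(nat list \<Rightarrow> 'k::field) \<Rightarrow> nat list \<times> nat list \<Rightarrow> 'k" where
  "DeltaS f = (\<lambda>ab. \<Sum>x\<in>supp f. f x * coprodS_basis x ab)"

definition prodZ_basis :: "(nat \<Rightarrow> (nat list \<times> nat list) set) \<Rightarrow> nat list \<Rightarrow> nat list \<Rightarrow> nat list \<Rightarrow> 'k::field" where
  "prodZ_basis \<Theta> u v x = of_bool (x \<in> Zset \<Theta> \<and> length x = length u + length v \<and>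
      bar (length u) x = shift_prod u v)"

definition mulZ :: "(nat \<Rightarrow> (nat list \<times> nat list) set) \<Rightarrow> (nat list \<Rightarrow> 'k::field) \<Rightarrow> (nat list \<Rightarrow> 'k) \<Rightarrow> nat list \<Rightarrow> 'k" where
  "mulZ \<Theta> f g = (\<lambda>x. \<Sum>u\<in>supp f. \<Sum>v\<in>supp g. f u * g v * prodZ_basis \<Theta> u v x)"

text \<open>c maps a basis element x of K[Z] to the sum of its Theta-class; extended linearly.\<close>
definition cmap :: "(nat \<Rightarrow> (nat list \<times> nat list) set) \<Rightarrow> (nat list \<Rightarrow> 'k::field) \<Rightarrow> nat list \<Rightarrow> 'k" where
  "cmap \<Theta> f = (\<lambda>y. \<Sum>z\<in>supp f. f z * of_bool ((y, z) \<in> \<Theta> (length z)))"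

definition rmap :: "(nat \<Rightarrow> (nat list \<times> nat list) set) \<Rightarrow> (nat list \<Rightarrow> 'k::field) \<Rightarrow> nat list \<Rightarrow> 'k" where
  "rmap \<Theta> f = (\<lambda>x. if x \<in> Zset \<Theta> then f x else 0)"

definition cc_map :: "(nat \<Rightarrow> (nat list \<times> nat list) set) \<Rightarrow> (nat list \<times> nat list \<Rightarrow> 'k::field) \<Rightarrow> nat list \<times> nat list \<Rightarrow> 'k" where
  "cc_map \<Theta> F = (\<lambda>(a, b). \<Sum>zw\<in>supp F. F zw *
      of_bool ((a, fst zw) \<in> \<Theta> (length (fst zw)) \<and> (b, snd zw) \<in> \<Theta> (length (snd zw))))"

definition rr_map :: "(nat \<Rightarrow> (nat list \<times> nat list) set) \<Rightarrow> (nat list \<times> nat list \<Rightarrow> 'k::field) \<Rightarrow> nat list \<times> nat list \<Rightarrow> 'k" where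
  "rr_map \<Theta> F = (\<lambda>(a, b). if a \<in> Zset \<Theta> \<and> b \<in> Zset \<Theta> then F (a, b) else 0)"

definition DeltaZ :: "(nat \<Rightarrow> (nat list \<times> nat list) set) \<Rightarrow> (nat list \<Rightarrow> 'k::field) \<Rightarrow> nat list \<times> nat list \<Rightarrow> 'k" where
  "DeltaZ \<Theta> f = rr_map \<Theta> (DeltaS (cmap \<Theta> f))"

end

theory Submission
  imports Defs
begin

fun bef :: "nat list \<Rightarrow> nat \<Rightarrow> nat \<Rightarrow> bool" where
  "bef [] b a = False"
| "bef (x # xs) b a = ((x = b \<and> a \<in> set xs) \<or> bef xs b a)"

lemma bef_iff: "bef xs b a \<longleftrightarrow> (\<exists>i j. i < j \<and> j < length xs \<and> xs ! i = b \<and> xs ! j = a)"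
proof (induction xs)
  case Nil then show ?case by simp
next
  case (Cons x xs)
  show ?case
  proof
    assume "bef (x # xs) b a"
    then consider "x = b" "a \<in> set xs" | "bef xs b a" by auto
    then show "\<exists>i j. i < j \<and> j < length (x # xs) \<and> (x # xs) ! i = b \<and> (x # xs) ! j = a"
    proof cases
      case 1
      then obtain j where "j < length xs" "xs ! j = a" by (auto simp: in_set_conv_nth)
      then show ?thesis using 1 by (intro exI[of _ 0] exI[of _ "Suc j"]) auto
    next
      case 2
      then obtain i j where "i < j" "j < length xs" "xs ! i = b" "xs ! j = a" using Cons.IH by auto
      then show ?thesis by (intro exI[of _ "Suc i"] exI[of _ "Suc j"]) auto
    qed
  next
    assume "\<exists>i j. i < j \<and> j < length (x # xs) \<and> (x # xs) ! i = b \<and> (x # xs) ! j = a"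
    then obtain i j where ij: "i < j" "j < length (x # xs)" "(x # xs) ! i = b" "(x # xs) ! j = a" by blast
    then obtain j' where j': "j = Suc j'" by (cases j) auto
    show "bef (x # xs) b a"
    proof (cases i)
      case 0
      then show ?thesis using ij j' by auto
    next
      case (Suc i')
      then have "bef xs b a" using Cons.IH ij j' by auto
      then show ?thesis by simp
    qed
  qed
qed

lemma inv_set_bef: "inv_set xs = {(a, b). a < b \<and> bef xs b a}"
  unfolding inv_set_def bef_iff by blast

lemma bef_set: "bef xs b a \<Longrightarrow> b \<in> set xs \<and> a \<in> set xs"
  by (induction xs) auto

lemma bef_append: "bef (xs @ ys) b a \<longleftrightarrow> bef xs b a \<or> bef ys b a \<or> (b \<in> set xs \<and> a \<in> set ys)"
  by (induction xs) (auto dest: bef_set)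

lemma bef_filter: "bef (filter P xs) b a \<longleftrightarrow> P b \<and> P a \<and> bef xs b a"
  by (induction xs) (auto dest: bef_set)

lemma bef_map: "inj f \<Longrightarrow> bef (map f xs) (f b) (f a) \<longleftrightarrow> bef xs b a"
  by (induction xs) (auto simp: inj_eq image_iff)

lemma bef_trans: "distinct xs \<Longrightarrow> bef xs a b \<Longrightarrow> bef xs b c \<Longrightarrow> bef xs a c"
  by (induction xs) (auto dest: bef_set)

lemma bef_irrefl: "distinct xs \<Longrightarrow> \<not> bef xs a a"
  by (induction xs) (auto dest: bef_set)

lemma bef_asym: "distinct xs \<Longrightarrow> bef xs a b \<Longrightarrow> \<not> bef xs b a"
  using bef_trans bef_irrefl by blast

lemma bef_total: "a \<in> set xs \<Longrightarrow> b \<in> set xs \<Longrightarrow> a \<noteq> b \<Longrightarrow> bef xs a b \<or> bef xs b a"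
  by (induction xs) auto

lemma list_eq_bef:
  "distinct xs \<Longrightarrow> distinct ys \<Longrightarrow> set xs = set ys \<Longrightarrow> (\<forall>a b. bef xs a b \<longleftrightarrow> bef ys a b) \<Longrightarrow> xs = ys"
proof (induction xs arbitrary: ys)
  case Nil then show ?case by simp
next
  case (Cons x xs)
  then obtain y ys' where ys: "ys = y # ys'" by (cases ys) auto
  have "x = y"
  proof (rule ccontr)
    assume "x \<noteq> y"
    then have "x \<in> set ys'" using Cons.prems ys by auto
    then have "bef ys y x" using ys by simp
    then have "bef (x # xs) y x" using Cons.prems by blast
    then show False using Cons.prems(1) bef_set by auto
  qed
  moreover have "xs = ys'"
  proof (rule Cons.IH)
    show "distinct xs" "distinct ys'" using Cons.prems ys by auto
    show "set xs = set ys'" using Cons.prems ys \<open>x = y\<close> by auto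
    show "\<forall>a b. bef xs a b \<longleftrightarrow> bef ys' a b"
    proof (intro allI)
      fix a b
      have "bef xs a b \<longleftrightarrow> bef (x # xs) a b \<and> a \<noteq> x" using Cons.prems(1) by (auto dest: bef_set)
      also have "\<dots> \<longleftrightarrow> bef (y # ys') a b \<and> a \<noteq> y" using Cons.prems(4) ys \<open>x = y\<close> by simp
      also have "\<dots> \<longleftrightarrow> bef ys' a b" using Cons.prems(2) ys by (auto dest: bef_set)
      finally show "bef xs a b \<longleftrightarrow> bef ys' a b" .
    qed
  qed
  ultimately show ?case using ys by simp
qed

lemma bef_by_inv:
  assumes "distinct xs"
  shows "bef xs b a \<longleftrightarrow> (a < b \<and> (a, b) \<in> inv_set xs) \<or> (b < a \<and> a \<in> set xs \<and> b \<in> set xs \<and> (b, a) \<notin> inv_set xs)"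
  using assms bef_asym[OF assms] bef_total[of a xs b] bef_irrefl[OF assms] bef_set[of xs b a]
proof (cases a b rule: linorder_cases)
  case less
  then show ?thesis unfolding inv_set_bef by auto
next
  case equal
  then show ?thesis using bef_irrefl[OF assms] by auto
next
  case greater
  then show ?thesis unfolding inv_set_bef using bef_asym[OF assms, of b a] bef_total[of a xs b] bef_set[of xs b a]
    by auto
qed

lemma inv_antisym:
  assumes "distinct x" "distinct y" "set x = set y" "inv_set x = inv_set y"
  shows "x = y"
  using assms by (intro list_eq_bef) (auto simp: bef_by_inv)

lemma Sn_distinct: "x \<in> Sn n \<Longrightarrow> distinct x" and Sn_set: "x \<in> Sn n \<Longrightarrow> set x = {1..n}"
  by (auto simp: Sn_def)

lemma Sn_length: "x \<in> Sn n \<Longrightarrow> length x = n"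
proof -
  assume "x \<in> Sn n"
  then have d: "distinct x" and st: "set x = {1..n}" by (auto simp: Sn_def)
  have "length x = card (set x)" using distinct_card[OF d] by simp
  then show ?thesis using st by simp
qed

lemma Sn_antisym: "x \<in> Sn n \<Longrightarrow> y \<in> Sn n \<Longrightarrow> weak_le x y \<Longrightarrow> weak_le y x \<Longrightarrow> x = y"
  unfolding weak_le_def by (rule inv_antisym) (auto simp: Sn_def)

lemma finite_Sn: "finite (Sn n)"
proof -
  have "Sn n \<subseteq> {xs. set xs \<subseteq> {1..n} \<and> length xs = n}" using Sn_length by (auto simp: Sn_def)
  moreover have "finite {xs. set xs \<subseteq> {1..n} \<and> length xs = n}"
    by (rule finite_lists_length_eq) simp
  ultimately show ?thesis by (rule finite_subset)
qed

definition Pn :: "nat \<Rightarrow> (nat \<times> nat) set" where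
  "Pn n = {(a, b). 1 \<le> a \<and> a < b \<and> b \<le> n}"

definition cocl :: "(nat \<times> nat) set \<Rightarrow> bool" where
  "cocl T \<longleftrightarrow> (\<forall>a b c. (a, c) \<in> T \<longrightarrow> a < b \<longrightarrow> b < c \<longrightarrow> (a, b) \<in> T \<or> (b, c) \<in> T)"

lemma trans_Pn: "trans (Pn n)"
  unfolding trans_def Pn_def by auto

lemma finite_Pn: "finite (Pn n)"
proof -
  have "Pn n \<subseteq> {1..n} \<times> {1..n}" unfolding Pn_def by auto
  then show ?thesis by (rule finite_subset) simp
qed

lemma inv_Pn: "x \<in> Sn n \<Longrightarrow> inv_set x \<subseteq> Pn n"
  unfolding inv_set_bef Pn_def using bef_set Sn_set by fastforce

lemma inv_trans: "distinct x \<Longrightarrow> trans (inv_set x)"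
  unfolding inv_set_bef trans_def using bef_trans by fastforce

lemma inv_cocl: assumes "x \<in> Sn n" shows "cocl (inv_set x)"
  unfolding cocl_def
proof (intro allI impI)
  fix a b c assume h: "(a, c) \<in> inv_set x" "a < b" "b < c"
  have d: "distinct x" using assms Sn_distinct by blast
  have "bef x c a" using h unfolding inv_set_bef by auto
  then have "a \<in> set x" "c \<in> set x" using bef_set by auto
  then have "b \<in> set x" using h Sn_set[OF assms] by auto
  have "bef x b a \<or> bef x a b" using bef_total[of b x a] \<open>b \<in> set x\<close> \<open>a \<in> set x\<close> h by auto
  then show "(a, b) \<in> inv_set x \<or> (b, c) \<in> inv_set x"
  proof
    assume "bef x b a" then show ?thesis using h unfolding inv_set_bef by auto
  next
    assume "bef x a b" then have "bef x c b" using bef_trans[OF d \<open>bef x c a\<close>] by blast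
    then show ?thesis using h unfolding inv_set_bef by auto
  qed
qed

lemma compl_trans: assumes "cocl T" shows "trans (Pn n - T)"
  unfolding trans_def
proof (intro allI impI)
  fix a b c assume h: "(a, b) \<in> Pn n - T" "(b, c) \<in> Pn n - T"
  have "(a, c) \<notin> T"
  proof
    assume "(a, c) \<in> T"
    moreover have "a < b" "b < c" using h unfolding Pn_def by auto
    ultimately have "(a, b) \<in> T \<or> (b, c) \<in> T" using assms unfolding cocl_def by blast
    then show False using h by auto
  qed
  then show "(a, c) \<in> Pn n - T" using h unfolding Pn_def by auto
qed

lemma compl_cocl: "trans T \<Longrightarrow> cocl (Pn n - T)"
  unfolding cocl_def trans_def Pn_def by auto

lemma trancl_Pn: "S \<subseteq> Pn n \<Longrightarrow> S\<^sup>+ \<subseteq> Pn n"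
  using trancl_mono_subset[of S "Pn n"] trancl_id[OF trans_Pn] by simp

lemma tc_cocl:
  assumes "S1 \<subseteq> Pn n" "S2 \<subseteq> Pn n" "cocl S1" "cocl S2"
  shows "cocl ((S1 \<union> S2)\<^sup>+)"
proof -
  let ?U = "S1 \<union> S2"
  have UP: "?U \<subseteq> Pn n" using assms by auto
  have UPt: "?U\<^sup>+ \<subseteq> Pn n" using trancl_Pn[OF UP] .
  have cU: "(a, c) \<in> ?U \<Longrightarrow> a < b \<Longrightarrow> b < c \<Longrightarrow> (a, b) \<in> ?U \<or> (b, c) \<in> ?U" for a b c
    using assms(3,4) unfolding cocl_def by blast
  have main: "(a, c) \<in> ?U\<^sup>+ \<Longrightarrow> \<forall>b. a < b \<longrightarrow> b < c \<longrightarrow> (a, b) \<in> ?U\<^sup>+ \<or> (b, c) \<in> ?U\<^sup>+" for a c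
  proof (induction rule: trancl_induct)
    case (base y)
    then show ?case using cU by blast
  next
    case (step y z)
    show ?case
    proof (intro allI impI)
      fix b assume b: "a < b" "b < z"
      have "y < z" using step.hyps(2) UP unfolding Pn_def by auto
      show "(a, b) \<in> ?U\<^sup>+ \<or> (b, z) \<in> ?U\<^sup>+"
      proof (cases b y rule: linorder_cases)
        case less
        then have "(a, b) \<in> ?U\<^sup>+ \<or> (b, y) \<in> ?U\<^sup>+" using step.IH b by blast
        then show ?thesis using step.hyps(2) by (meson trancl_into_trancl)
      next
        case equal then show ?thesis using step.hyps(1) by simp
      next
        case greater
        then have "(y, b) \<in> ?U \<or> (b, z) \<in> ?U" using cU[OF step.hyps(2)] b by blast
        then show ?thesis using step.hyps(1) by (meson r_into_trancl trancl_into_trancl)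
      qed
    qed
  qed
  show ?thesis unfolding cocl_def using main by blast
qed

lemma sorted_bef:
  "sorted (map r l) \<Longrightarrow> distinct l \<Longrightarrow> inj_on r (set l) \<Longrightarrow>
    bef l b a \<longleftrightarrow> b \<in> set l \<and> a \<in> set l \<and> r b < r a"
proof (induction l)
  case Nil then show ?case by simp
next
  case (Cons x l)
  have le: "\<forall>y\<in>set l. r x \<le> r y" using Cons.prems(1) by simp
  have ne: "\<forall>y\<in>set l. r x \<noteq> r y" using Cons.prems(2,3) by (auto simp: inj_on_def)
  have IH: "bef l b a \<longleftrightarrow> b \<in> set l \<and> a \<in> set l \<and> r b < r a"
    using Cons by (auto intro: inj_on_subset)
  show ?case using le ne IH by (auto simp: le_less)
qed

lemma construct:
  assumes TP: "T \<subseteq> Pn n" and Tt: "trans T" and Tc: "cocl T"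
  shows "\<exists>m\<in>Sn n. inv_set m = T"
proof -
  define lt where "lt b a \<longleftrightarrow> (b < a \<and> (b, a) \<notin> T) \<or> (a < b \<and> (a, b) \<in> T)" for b a :: nat
  have tT: "(a, b) \<in> T \<Longrightarrow> (b, c) \<in> T \<Longrightarrow> (a, c) \<in> T" for a b c using Tt unfolding trans_def by blast
  have cT: "(a, c) \<in> T \<Longrightarrow> a < b \<Longrightarrow> b < c \<Longrightarrow> (a, b) \<in> T \<or> (b, c) \<in> T" for a b c
    using Tc unfolding cocl_def by blast
  have lt_irr: "\<not> lt a a" for a unfolding lt_def by auto
  have lt_asym: "lt a b \<Longrightarrow> \<not> lt b a" for a b unfolding lt_def by auto
  have lt_tot: "a \<noteq> b \<Longrightarrow> lt a b \<or> lt b a" for a b unfolding lt_def by auto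
  have lt_trans: "lt c b \<Longrightarrow> lt b a \<Longrightarrow> lt c a" for a b c
  proof -
    assume h: "lt c b" "lt b a"
    have "c \<noteq> a" using h lt_asym by blast
    have "c \<noteq> b" "b \<noteq> a" using h lt_irr by auto
    consider "c < b" "b < a" | "c < a" "a < b" | "b < c" "c < a" | "b < a" "a < c" | "a < c" "c < b" | "a < b" "b < c"
      using \<open>c \<noteq> a\<close> \<open>c \<noteq> b\<close> \<open>b \<noteq> a\<close> by linarith
    then show "lt c a"
    proof cases
      case 1 then show ?thesis using h cT[of c a b] unfolding lt_def by auto
    next
      case 2 then show ?thesis using h tT[of c a b] unfolding lt_def by auto
    next
      case 3 then show ?thesis using h tT[of b c a] unfolding lt_def by auto
    next
      case 4 then show ?thesis using h cT[of b c a] unfolding lt_def by auto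
    next
      case 5 then show ?thesis using h cT[of a b c] unfolding lt_def by auto
    next
      case 6 then show ?thesis using h tT[of a b c] unfolding lt_def by auto
    qed
  qed
  define r where "r a = card {c \<in> {1..n}. lt c a}" for a
  have r_mono: "lt b a \<Longrightarrow> b \<in> {1..n} \<Longrightarrow> r b < r a" for a b
  proof -
    assume h: "lt b a" "b \<in> {1..n}"
    have "{c \<in> {1..n}. lt c b} \<subset> {c \<in> {1..n}. lt c a}"
      using h lt_trans lt_irr by blast
    then show "r b < r a" unfolding r_def by (rule psubset_card_mono[rotated]) simp
  qed
  have r_iff: "a \<in> {1..n} \<Longrightarrow> b \<in> {1..n} \<Longrightarrow> r b < r a \<longleftrightarrow> lt b a" for a b
    using r_mono lt_tot by (metis less_irrefl less_not_sym)
  have r_inj: "inj_on r {1..n}"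
    unfolding inj_on_def using r_mono lt_tot by (metis less_irrefl)
  define m where "m = sort_key r [1..<Suc n]"
  have setm: "set m = {1..n}" unfolding m_def by auto
  have dm: "distinct m" unfolding m_def by simp
  have sm: "sorted (map r m)" unfolding m_def by simp
  have bm: "bef m b a \<longleftrightarrow> b \<in> {1..n} \<and> a \<in> {1..n} \<and> lt b a" for a b
    using sorted_bef[OF sm dm, of b a] r_inj setm r_iff by auto
  have "m \<in> Sn n" unfolding Sn_def using setm dm by simp
  moreover have "inv_set m = T"
  proof -
    have "inv_set m = {(a, b). a < b \<and> a \<in> {1..n} \<and> b \<in> {1..n} \<and> lt b a}"
      unfolding inv_set_bef bm by auto
    also have "\<dots> = T" using TP unfolding lt_def Pn_def by auto
    finally show ?thesis .
  qed
  ultimately show ?thesis by blast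
qed

lemma meet_exists:
  assumes x: "x \<in> Sn n" and y: "y \<in> Sn n"
  shows "\<exists>m\<in>Sn n. weak_le m x \<and> weak_le m y \<and> (\<forall>z\<in>Sn n. weak_le z x \<and> weak_le z y \<longrightarrow> weak_le z m)"
proof -
  define N where "N = ((Pn n - inv_set x) \<union> (Pn n - inv_set y))\<^sup>+"
  have cN: "cocl N" unfolding N_def
    by (rule tc_cocl) (auto intro: compl_cocl inv_trans Sn_distinct x y)
  have NP: "N \<subseteq> Pn n" unfolding N_def by (rule trancl_Pn) auto
  have tN: "trans N" unfolding N_def by simp
  obtain m where m: "m \<in> Sn n" "inv_set m = Pn n - N"
    using construct[of "Pn n - N" n] compl_trans[OF cN] compl_cocl[OF tN] by auto
  have "weak_le m x" unfolding weak_le_def m N_def using inv_Pn[OF x] by auto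
  moreover have "weak_le m y" unfolding weak_le_def m N_def using inv_Pn[OF y] by auto
  moreover have "weak_le z m" if z: "z \<in> Sn n" "weak_le z x" "weak_le z y" for z
  proof -
    have tz: "trans (Pn n - inv_set z)" using compl_trans inv_cocl[OF z(1)] by blast
    have "N \<subseteq> Pn n - inv_set z" unfolding N_def
      using trancl_mono_subset[of "(Pn n - inv_set x) \<union> (Pn n - inv_set y)" "Pn n - inv_set z"]
        trancl_id[OF tz] z(2,3) unfolding weak_le_def by auto
    then show ?thesis unfolding weak_le_def m using inv_Pn[OF z(1)] by auto
  qed
  ultimately show ?thesis using m(1) by blast
qed

lemma join_exists:
  assumes x: "x \<in> Sn n" and y: "y \<in> Sn n"
  shows "\<exists>m\<in>Sn n. weak_le x m \<and> weak_le y m \<and> (\<forall>z\<in>Sn n. weak_le x z \<and> weak_le y z \<longrightarrow> weak_le m z)"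
proof -
  define J where "J = (inv_set x \<union> inv_set y)\<^sup>+"
  have cJ: "cocl J" unfolding J_def
    by (rule tc_cocl[where n=n]) (use inv_Pn[OF x] inv_Pn[OF y] inv_cocl[OF x] inv_cocl[OF y] in auto)
  have JP: "J \<subseteq> Pn n" unfolding J_def by (rule trancl_Pn) (use inv_Pn x y in auto)
  have tJ: "trans J" unfolding J_def by simp
  obtain m where m: "m \<in> Sn n" "inv_set m = J"
    using construct[OF JP tJ cJ] by auto
  have "weak_le x m" "weak_le y m" unfolding weak_le_def m J_def by auto
  moreover have "weak_le m z" if z: "z \<in> Sn n" "weak_le x z" "weak_le y z" for z
  proof -
    have tz: "trans (inv_set z)" using inv_trans Sn_distinct z(1) by blast
    show ?thesis unfolding weak_le_def m J_def
      using trancl_mono_subset[of "inv_set x \<union> inv_set y" "inv_set z"] trancl_id[OF tz] z(2,3)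
      unfolding weak_le_def by auto
  qed
  ultimately show ?thesis using m(1) by blast
qed

lemma weak_le_refl: "weak_le x x" unfolding weak_le_def by simp
lemma weak_le_trans: "weak_le x y \<Longrightarrow> weak_le y z \<Longrightarrow> weak_le x z" unfolding weak_le_def by simp

lemma wmeet_props:
  assumes x: "x \<in> Sn n" and y: "y \<in> Sn n"
  shows "wmeet n x y \<in> Sn n \<and> weak_le (wmeet n x y) x \<and> weak_le (wmeet n x y) y \<and>
    (\<forall>z\<in>Sn n. weak_le z x \<and> weak_le z y \<longrightarrow> weak_le z (wmeet n x y))"
proof -
  obtain m where m: "m\<in>Sn n" "weak_le m x" "weak_le m y" "\<forall>z\<in>Sn n. weak_le z x \<and> weak_le z y \<longrightarrow> weak_le z m"
    using meet_exists[OF x y] by blast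
  have "wmeet n x y = m" unfolding wmeet_def
    by (rule the_equality) (use m Sn_antisym in blast)+
  then show ?thesis using m by simp
qed

lemma wjoin_props:
  assumes x: "x \<in> Sn n" and y: "y \<in> Sn n"
  shows "wjoin n x y \<in> Sn n \<and> weak_le x (wjoin n x y) \<and> weak_le y (wjoin n x y) \<and>
    (\<forall>z\<in>Sn n. weak_le x z \<and> weak_le y z \<longrightarrow> weak_le (wjoin n x y) z)"
proof -
  obtain m where m: "m\<in>Sn n" "weak_le x m" "weak_le y m" "\<forall>z\<in>Sn n. weak_le x z \<and> weak_le y z \<longrightarrow> weak_le m z"
    using join_exists[OF x y] by blast
  have "wjoin n x y = m" unfolding wjoin_def
    by (rule the_equality) (use m Sn_antisym in blast)+
  then show ?thesis using m by simp
qed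

lemma wmeet_le: "x \<in> Sn n \<Longrightarrow> y \<in> Sn n \<Longrightarrow> weak_le y x \<Longrightarrow> wmeet n x y = y"
  using wmeet_props[of x n y] Sn_antisym weak_le_refl by metis

locale hfam =
  fixes \<Theta> :: "nat \<Rightarrow> (nat list \<times> nat list) set"
  assumes H: "H_family \<Theta>"
begin

lemma lc: "lattice_cong n (\<Theta> n)" using H unfolding H_family_def by blast
lemma eqv: "equiv (Sn n) (\<Theta> n)" using lc unfolding lattice_cong_def by blast

lemma th_Sn: "(x, y) \<in> \<Theta> n \<Longrightarrow> x \<in> Sn n \<and> y \<in> Sn n"
  using eqv[of n] unfolding equiv_def refl_on_def by blast
lemma th_refl: "x \<in> Sn n \<Longrightarrow> (x, x) \<in> \<Theta> n"
  using eqv[of n] unfolding equiv_def refl_on_def by blast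
lemma th_sym: "(x, y) \<in> \<Theta> n \<Longrightarrow> (y, x) \<in> \<Theta> n"
  using eqv[of n] unfolding equiv_def sym_def by blast
lemma th_trans: "(x, y) \<in> \<Theta> n \<Longrightarrow> (y, z) \<in> \<Theta> n \<Longrightarrow> (x, z) \<in> \<Theta> n"
  using eqv[of n] unfolding equiv_def trans_def by blast
lemma meet_cong: "(x, y) \<in> \<Theta> n \<Longrightarrow> z \<in> Sn n \<Longrightarrow> (wmeet n x z, wmeet n y z) \<in> \<Theta> n"
  using lc[of n] unfolding lattice_cong_def by blast
lemma join_cong: "(x, y) \<in> \<Theta> n \<Longrightarrow> z \<in> Sn n \<Longrightarrow> (wjoin n x z, wjoin n y z) \<in> \<Theta> n"
  using lc[of n] unfolding lattice_cong_def by blast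
lemma transl: "translational \<Theta>" using H unfolding H_family_def by blast
lemma insl: "insertional \<Theta>" using H unfolding H_family_def by blast

lemma th_len: "(x, y) \<in> \<Theta> n \<Longrightarrow> length x = n \<and> length y = n"
  using th_Sn Sn_length by blast

lemma class_min:
  assumes x: "x \<in> Sn n"
  shows "\<exists>m. (m, x) \<in> \<Theta> n \<and> (\<forall>y. (y, x) \<in> \<Theta> n \<longrightarrow> weak_le m y)"
proof -
  have "\<exists>m. (m, x) \<in> \<Theta> n \<and> (\<forall>y. (y, x) \<in> \<Theta> n \<longrightarrow> card (inv_set m) \<le> card (inv_set y))"
    by (rule ex_has_least_nat[where k=x]) (rule th_refl[OF x])
  then obtain m where m: "(m, x) \<in> \<Theta> n" and mmin: "\<forall>y. (y, x) \<in> \<Theta> n \<longrightarrow> card (inv_set m) \<le> card (inv_set y)"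
    by blast
  have mS: "m \<in> Sn n" using th_Sn m by blast
  have "weak_le m y" if y: "(y, x) \<in> \<Theta> n" for y
  proof -
    have yS: "y \<in> Sn n" using th_Sn y by blast
    have ym: "(y, m) \<in> \<Theta> n" using th_trans[OF y th_sym[OF m]] .
    define w where "w = wmeet n y m"
    have "(w, wmeet n m m) \<in> \<Theta> n" unfolding w_def by (rule meet_cong[OF ym mS])
    moreover have "wmeet n m m = m" by (rule wmeet_le[OF mS mS weak_le_refl])
    ultimately have wm: "(w, m) \<in> \<Theta> n" by simp
    have wp: "w \<in> Sn n" "weak_le w y" "weak_le w m" using wmeet_props[OF yS mS] unfolding w_def by auto
    have c1: "card (inv_set m) \<le> card (inv_set w)" using mmin th_trans[OF wm m] by blast
    have sub: "inv_set w \<subseteq> inv_set m" using wp(3) unfolding weak_le_def .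
    have fin: "finite (inv_set m)" using inv_Pn[OF mS] finite_Pn by (rule finite_subset)
    have "card (inv_set w) \<le> card (inv_set m)" by (rule card_mono[OF fin sub])
    then have "card (inv_set w) = card (inv_set m)" using c1 by linarith
    then have "inv_set w = inv_set m" by (rule card_subset_eq[OF fin sub])
    then have "w = m" using Sn_antisym[OF wp(1) mS] by (simp add: weak_le_def)
    then show ?thesis using wp by simp
  qed
  then show ?thesis using m by blast
qed

lemma pi_down_props:
  assumes x: "x \<in> Sn (length x)"
  shows "(pi_down \<Theta> x, x) \<in> \<Theta> (length x) \<and> (\<forall>y. (y, x) \<in> \<Theta> (length x) \<longrightarrow> weak_le (pi_down \<Theta> x) y)"
proof -
  obtain m where m: "(m, x) \<in> \<Theta> (length x)" "\<forall>y. (y, x) \<in> \<Theta> (length x) \<longrightarrow> weak_le m y"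
    using class_min[OF x] by blast
  have "pi_down \<Theta> x = m" unfolding pi_down_def
  proof (rule the_equality)
    show "(m, x) \<in> \<Theta> (length x) \<and> (\<forall>y. (y, x) \<in> \<Theta> (length x) \<longrightarrow> weak_le m y)" using m by blast
  next
    fix m' assume m': "(m', x) \<in> \<Theta> (length x) \<and> (\<forall>y. (y, x) \<in> \<Theta> (length x) \<longrightarrow> weak_le m' y)"
    then have "weak_le m' m" "weak_le m m'" using m by blast+
    moreover have "m \<in> Sn (length x)" "m' \<in> Sn (length x)" using m(1) m' th_Sn by blast+
    ultimately show "m' = m" using Sn_antisym by blast
  qed
  then show ?thesis using m by simp
qed

lemma pi_down_cong:
  assumes "(x, y) \<in> \<Theta> (length y)"
  shows "pi_down \<Theta> x = pi_down \<Theta> y"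
proof -
  have len: "length x = length y" using th_len assms by blast
  have eq: "(m, x) \<in> \<Theta> (length y) \<longleftrightarrow> (m, y) \<in> \<Theta> (length y)" for m
    using assms th_trans th_sym by blast
  show ?thesis unfolding pi_down_def len eq ..
qed

lemma pi_down_Z: "x \<in> Sn (length x) \<Longrightarrow> pi_down \<Theta> x \<in> Zset \<Theta>"
proof -
  assume x: "x \<in> Sn (length x)"
  have p: "(pi_down \<Theta> x, x) \<in> \<Theta> (length x)" using pi_down_props[OF x] by blast
  have "length (pi_down \<Theta> x) = length x" using th_len[OF p] by simp
  then show ?thesis unfolding Zset_def using pi_down_cong[OF p] th_Sn[OF p] by simp
qed

lemma Z_Sn: "z \<in> Zset \<Theta> \<Longrightarrow> z \<in> Sn (length z)" unfolding Zset_def by simp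
lemma Z_fix: "z \<in> Zset \<Theta> \<Longrightarrow> pi_down \<Theta> z = z" unfolding Zset_def by simp

lemma Z_eq: "z \<in> Zset \<Theta> \<Longrightarrow> (a, z) \<in> \<Theta> (length z) \<Longrightarrow> pi_down \<Theta> a = z"
proof -
  assume z: "z \<in> Zset \<Theta>" and h: "(a, z) \<in> \<Theta> (length z)"
  show ?thesis using pi_down_cong[OF h] Z_fix[OF z] by simp
qed

lemma Z_iff:
  assumes z: "z \<in> Zset \<Theta>"
  shows "(a, z) \<in> \<Theta> (length z) \<longleftrightarrow> a \<in> Sn (length a) \<and> pi_down \<Theta> a = z"
proof
  assume h: "(a, z) \<in> \<Theta> (length z)"
  have "a \<in> Sn (length z)" "length a = length z" using th_Sn[OF h] th_len[OF h] by auto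
  then show "a \<in> Sn (length a) \<and> pi_down \<Theta> a = z" using Z_eq[OF z h] by simp
next
  assume h: "a \<in> Sn (length a) \<and> pi_down \<Theta> a = z"
  then have za: "(z, a) \<in> \<Theta> (length a)" using pi_down_props by blast
  then have "length z = length a" using th_len by blast
  then show "(a, z) \<in> \<Theta> (length z)" using th_sym[OF za] by simp
qed

lemma Z_min: "z \<in> Zset \<Theta> \<Longrightarrow> (y, z) \<in> \<Theta> (length z) \<Longrightarrow> weak_le z y"
proof -
  assume z: "z \<in> Zset \<Theta>" and h: "(y, z) \<in> \<Theta> (length z)"
  show ?thesis using pi_down_props[OF Z_Sn[OF z]] Z_fix[OF z] h by simp
qed

lemma Z_unique: "z \<in> Zset \<Theta> \<Longrightarrow> z' \<in> Zset \<Theta> \<Longrightarrow> (z, z') \<in> \<Theta> (length z') \<Longrightarrow> z = z'"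
proof -
  assume z: "z \<in> Zset \<Theta>" and z': "z' \<in> Zset \<Theta>" and h: "(z, z') \<in> \<Theta> (length z')"
  show ?thesis using Z_eq[OF z' h] Z_fix[OF z] by simp
qed

lemma cmap_formula:
  assumes f: "f \<in> KZ \<Theta>"
  shows "cmap \<Theta> f x = (if x \<in> Sn (length x) then f (pi_down \<Theta> x) else 0)"
proof -
  have fin: "finite (supp f)" and sZ: "supp f \<subseteq> Zset \<Theta>" using f unfolding KZ_def by auto
  have "cmap \<Theta> f x = (\<Sum>z\<in>supp f. if z = pi_down \<Theta> x then (if x \<in> Sn (length x) then f z else 0) else 0)"
    unfolding cmap_def
  proof (rule sum.cong[OF refl])
    fix z assume "z \<in> supp f"
    then have "z \<in> Zset \<Theta>" using sZ by blast
    then show "f z * of_bool ((x, z) \<in> \<Theta> (length z)) =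
      (if z = pi_down \<Theta> x then (if x \<in> Sn (length x) then f z else 0) else 0)"
      unfolding Z_iff[OF \<open>z \<in> Zset \<Theta>\<close>] by auto
  qed
  also have "\<dots> = (if pi_down \<Theta> x \<in> supp f then (if x \<in> Sn (length x) then f (pi_down \<Theta> x) else 0) else 0)"
    by (rule sum.delta[OF fin])
  also have "\<dots> = (if x \<in> Sn (length x) then f (pi_down \<Theta> x) else 0)"
    unfolding supp_def by auto
  finally show ?thesis .
qed

end

lemma rk_mono:
  assumes "finite S" "a' \<in> S" "a < a'"
  shows "card {b \<in> S. b \<le> a} < card {b \<in> S. b \<le> (a'::nat)}"
proof (rule psubset_card_mono)
  show "finite {b \<in> S. b \<le> a'}" using assms(1) by simp
  have "a' \<in> {b \<in> S. b \<le> a'}" "a' \<notin> {b \<in> S. b \<le> a}" using assms by auto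
  moreover have "{b \<in> S. b \<le> a} \<subseteq> {b \<in> S. b \<le> a'}" using assms by auto
  ultimately show "{b \<in> S. b \<le> a} \<subset> {b \<in> S. b \<le> a'}" by blast
qed

lemma smono_inj:
  assumes "\<forall>a\<in>S. \<forall>b\<in>S. a < b \<longrightarrow> g a < (g b :: nat)"
  shows "inj_on g (S :: nat set)"
  unfolding inj_on_def
proof (intro ballI impI)
  fix a b assume ab: "a \<in> S" "b \<in> S" "g a = g b"
  show "a = b"
  proof (cases a b rule: linorder_cases)
    case less then show ?thesis using assms ab by force
  next
    case greater then show ?thesis using assms ab by force
  qed simp
qed

lemma rk_inj: "finite S \<Longrightarrow> inj_on (\<lambda>a. card {b \<in> S. b \<le> (a::nat)}) S"
  by (rule smono_inj) (use rk_mono in blast)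

lemma length_st[simp]: "length (st xs) = length xs" unfolding st_def by simp

lemma st_id:
  assumes "distinct xs" "set xs = {1..k}"
  shows "st xs = xs"
proof -
  have "card {b \<in> set xs. b \<le> a} = a" if "a \<in> set xs" for a
  proof -
    have "{b \<in> set xs. b \<le> a} = {1..a}" using that assms(2) by auto
    then show ?thesis by simp
  qed
  then show ?thesis unfolding st_def by (simp add: map_idI)
qed

lemma st_shift:
  assumes "distinct xs" "set xs = {Suc p..n}"
  shows "st xs = map (\<lambda>a. a - p) xs"
proof -
  have "card {b \<in> set xs. b \<le> a} = a - p" if "a \<in> set xs" for a
  proof -
    have "{b \<in> set xs. b \<le> a} = {Suc p..a}" using that assms(2) by auto
    then show ?thesis by simp
  qed
  then show ?thesis unfolding st_def by simp
qed

lemma st_Sn: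
  assumes d: "distinct xs"
  shows "st xs \<in> Sn (length xs)"
proof -
  let ?S = "set xs"
  let ?rk = "\<lambda>a. card {b \<in> ?S. b \<le> a}"
  have inj: "inj_on ?rk ?S" by (rule rk_inj) simp
  have "distinct (st xs)" unfolding st_def using d inj by (simp add: distinct_map)
  moreover have "set (st xs) = {1..length xs}"
  proof -
    have sub: "?rk ` ?S \<subseteq> {1..length xs}"
    proof
      fix c assume "c \<in> ?rk ` ?S"
      then obtain a where a: "a \<in> ?S" "c = ?rk a" by blast
      have "a \<in> {b \<in> ?S. b \<le> a}" using a by simp
      then have "{b \<in> ?S. b \<le> a} \<noteq> {}" by blast
      then have "0 < card {b \<in> ?S. b \<le> a}" by (simp add: card_gt_0_iff)
      then have "1 \<le> c" using a by simp
      moreover have "c \<le> card ?S" using a by (simp add: card_mono)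
      ultimately show "c \<in> {1..length xs}" using distinct_card[OF d] by simp
    qed
    have "card (?rk ` ?S) = length xs" using card_image[OF inj] distinct_card[OF d] by simp
    then have "?rk ` ?S = {1..length xs}" using card_subset_eq[OF _ sub] by simp
    then show ?thesis unfolding st_def by simp
  qed
  ultimately show ?thesis unfolding Sn_def by simp
qed

lemma st_map_mono:
  assumes mono: "\<forall>a\<in>set xs. \<forall>b\<in>set xs. a < b \<longrightarrow> g a < (g b :: nat)"
  shows "st (map g xs) = st xs"
proof -
  have inj: "inj_on g (set xs)" by (rule smono_inj[OF mono])
  have le: "a \<in> set xs \<Longrightarrow> b \<in> set xs \<Longrightarrow> g b \<le> g a \<longleftrightarrow> b \<le> a" for a b
  proof -
    assume ab: "a \<in> set xs" "b \<in> set xs"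
    show ?thesis
    proof (cases a b rule: linorder_cases)
      case less then show ?thesis using mono ab by force
    next
      case greater then show ?thesis using mono ab by force
    qed simp
  qed
  have ce: "card {c \<in> g ` set xs. c \<le> g a} = card {b \<in> set xs. b \<le> a}" if a: "a \<in> set xs" for a
  proof -
    have "{c \<in> g ` set xs. c \<le> g a} = g ` {b \<in> set xs. b \<le> a}" using le[OF a] by auto
    moreover have "inj_on g {b \<in> set xs. b \<le> a}" using inj by (rule inj_on_subset) blast
    ultimately show ?thesis using card_image by simp
  qed
  have "st (map g xs) = map (\<lambda>a. card {c \<in> g ` set xs. c \<le> g a}) xs" unfolding st_def by simp
  also have "\<dots> = map (\<lambda>a. card {b \<in> set xs. b \<le> a}) xs" by (rule map_cong[OF refl]) (rule ce)
  also have "\<dots> = st xs" unfolding st_def ..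
  finally show ?thesis .
qed

lemma st_inj:
  assumes "distinct l" "distinct l'" "set l = set l'" "st l = st l'"
  shows "l = l'"
proof -
  have len: "length l = length l'" using arg_cong[OF assms(4), of length] by simp
  let ?rk = "\<lambda>a. card {b \<in> set l. b \<le> a}"
  have inj: "inj_on ?rk (set l)" by (rule rk_inj) simp
  show ?thesis
  proof (rule nth_equalityI[OF len])
    fix i assume i: "i < length l"
    have "st l ! i = st l' ! i" using assms(4) by simp
    moreover have "st l ! i = ?rk (l ! i)" unfolding st_def using i by (rule nth_map)
    moreover have "st l' ! i = ?rk (l' ! i)" unfolding st_def assms(3)[symmetric] using i len by (intro nth_map) simp
    ultimately have "?rk (l ! i) = ?rk (l' ! i)" by simp
    moreover have "l ! i \<in> set l" using i by simp
    moreover have "l' ! i \<in> set l" unfolding assms(3) using i len by simp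
    ultimately show "l ! i = l' ! i" by (rule inj_onD[OF inj])
  qed
qed

definition Lp :: "nat \<Rightarrow> (nat \<times> nat) set" where
  "Lp p = {(a, b). b \<le> p \<or> p < a}"

lemma low_props:
  assumes x: "x \<in> Sn n" and p: "p \<le> n"
  shows "distinct (filter (\<lambda>a. a \<le> p) x)" "set (filter (\<lambda>a. a \<le> p) x) = {1..p}"
    "length (filter (\<lambda>a. a \<le> p) x) = p"
    "distinct (filter (\<lambda>a. p < a) x)" "set (filter (\<lambda>a. p < a) x) = {Suc p..n}"
    "length (filter (\<lambda>a. p < a) x) = n - p"
proof -
  have d: "distinct x" and s: "set x = {1..n}" using x by (auto simp: Sn_def)
  show d1: "distinct (filter (\<lambda>a. a \<le> p) x)" "distinct (filter (\<lambda>a. p < a) x)" using d by auto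
  show s1: "set (filter (\<lambda>a. a \<le> p) x) = {1..p}" using s p by auto
  show s2: "set (filter (\<lambda>a. p < a) x) = {Suc p..n}" using s by auto
  show "length (filter (\<lambda>a. a \<le> p) x) = p" using distinct_card[OF d1(1)] s1 by simp
  show "length (filter (\<lambda>a. p < a) x) = n - p" using distinct_card[OF d1(2)] s2 by simp
qed

lemma bar_eq:
  assumes x: "x \<in> Sn n" and p: "p \<le> n"
  shows "bar p x = filter (\<lambda>a. a \<le> p) x @ filter (\<lambda>a. p < a) x"
proof -
  note lp = low_props[OF x p]
  have st1: "st (filter (\<lambda>a. a \<le> p) x) = filter (\<lambda>a. a \<le> p) x" using st_id lp by blast
  have st2: "st (filter (\<lambda>a. p < a) x) = map (\<lambda>a. a - p) (filter (\<lambda>a. p < a) x)" using st_shift lp by blast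
  have "map (\<lambda>b. p + b) (map (\<lambda>a. a - p) (filter (\<lambda>a. p < a) x)) = filter (\<lambda>a. p < a) x"
    by (induction x) auto
  then show ?thesis unfolding bar_def shift_prod_def st1 st2 lp(3) by simp
qed

lemma bar_Sn:
  assumes x: "x \<in> Sn n" and p: "p \<le> n"
  shows "bar p x \<in> Sn n"
proof -
  have d: "distinct x" and s: "set x = {1..n}" using x by (auto simp: Sn_def)
  have "distinct (filter (\<lambda>a. a \<le> p) x @ filter (\<lambda>a. p < a) x)"
    unfolding distinct_append using d by auto
  moreover have "set (filter (\<lambda>a. a \<le> p) x @ filter (\<lambda>a. p < a) x) = set x" by auto
  ultimately show ?thesis unfolding bar_eq[OF x p] Sn_def using s by simp
qed

lemma inv_bar:
  assumes x: "x \<in> Sn n" and p: "p \<le> n"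
  shows "inv_set (bar p x) = inv_set x \<inter> Lp p"
  unfolding bar_eq[OF x p] inv_set_bef bef_append bef_filter Lp_def by auto

lemma inv_filter: "inv_set (filter P x) = inv_set x \<inter> {(a, b). P a \<and> P b}"
  unfolding inv_set_bef bef_filter by auto

lemma inv_map_shift: "(a, b) \<in> inv_set (map (\<lambda>c. p + c) v) \<longleftrightarrow> (\<exists>a' b'. a = p + a' \<and> b = p + b' \<and> (a', b') \<in> inv_set v)"
proof -
  have inj: "inj (\<lambda>c. p + (c::nat))" by (simp add: inj_def)
  have "bef (map (\<lambda>c. p + c) v) b a \<Longrightarrow> \<exists>a' b'. a = p + a' \<and> b = p + b'" by (auto dest!: bef_set)
  then show ?thesis unfolding inv_set_bef using bef_map[OF inj, of v] by auto
qed

lemma phi_unique: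
  assumes x: "x \<in> Sn n" and x': "x' \<in> Sn n"
    and h: "set (take p x) = set (take p x')" "st (take p x) = st (take p x')" "st (drop p x) = st (drop p x')"
  shows "x = x'"
proof -
  have d: "distinct x" "distinct x'" using x x' by (auto simp: Sn_def)
  have s: "set x = set x'" using x x' by (auto simp: Sn_def)
  have t: "take p x = take p x'" using st_inj[OF _ _ h(1) h(2)] d by simp
  have sd: "set (drop p y) = set y - set (take p y)" if "distinct y" for y :: "nat list"
  proof -
    have "distinct (take p y @ drop p y)" using that by simp
    then have "set (take p y) \<inter> set (drop p y) = {}" by (simp only: distinct_append)
    moreover have "set y = set (take p y) \<union> set (drop p y)" by (metis append_take_drop_id set_append)
    ultimately show ?thesis by blast
  qed
  have "set (drop p x) = set x - set (take p x)" by (rule sd[OF d(1)])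
  moreover have "set (drop p x') = set x' - set (take p x')" by (rule sd[OF d(2)])
  ultimately have "set (drop p x) = set (drop p x')" using s h(1) by simp
  then have "drop p x = drop p x'" using st_inj[OF _ _ _ h(3)] d by simp
  then show ?thesis using t by (metis append_take_drop_id)
qed

lemma sl_mono:
  assumes "finite A" "i < j" "j < card A"
  shows "sorted_list_of_set A ! i < sorted_list_of_set A ! j"
  using sorted_wrt_nth_less[OF strict_sorted_list_of_set[of A]] assms by simp

lemma map_sl:
  assumes u: "u \<in> Sn k" and A: "finite A" "card A = k"
  shows "st (map (\<lambda>i. sorted_list_of_set A ! (i - 1)) u) = u"
    "set (map (\<lambda>i. sorted_list_of_set A ! (i - 1)) u) = A"
    "distinct (map (\<lambda>i. sorted_list_of_set A ! (i - 1)) u)"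
proof -
  let ?g = "\<lambda>i. sorted_list_of_set A ! (i - 1)"
  have su: "set u = {1..k}" and du: "distinct u" using u by (auto simp: Sn_def)
  have mono: "\<forall>a\<in>set u. \<forall>b\<in>set u. a < b \<longrightarrow> ?g a < ?g b"
    using sl_mono[OF A(1)] A(2) su by auto
  show "st (map ?g u) = u" using st_map_mono[OF mono] st_id[OF du su] by simp
  have "?g ` {1..k} = set (sorted_list_of_set A)"
  proof
    show "?g ` {1..k} \<subseteq> set (sorted_list_of_set A)"
    proof
      fix c assume "c \<in> ?g ` {1..k}"
      then obtain i where i: "i \<in> {1..k}" "c = ?g i" by blast
      then have "i - 1 < length (sorted_list_of_set A)" using A by auto
      then show "c \<in> set (sorted_list_of_set A)" unfolding i(2) by (rule nth_mem)
    qed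
    show "set (sorted_list_of_set A) \<subseteq> ?g ` {1..k}"
    proof
      fix c assume "c \<in> set (sorted_list_of_set A)"
      then obtain j where j: "j < length (sorted_list_of_set A)" "sorted_list_of_set A ! j = c"
        by (auto simp: in_set_conv_nth)
      then have "Suc j \<in> {1..k}" using A by simp
      then show "c \<in> ?g ` {1..k}" using j by force
    qed
  qed
  then show "set (map ?g u) = A" using su A by simp
  have "inj_on ?g (set u)" by (rule smono_inj[OF mono])
  then show "distinct (map ?g u)" using du by (simp add: distinct_map)
qed

lemma phi_props:
  assumes Q: "Q \<subseteq> {1..p + q}" "card Q = p" and u: "u \<in> Sn p" and v: "v \<in> Sn q"
  shows "phi Q u v \<in> Sn (p + q) \<and> set (take p (phi Q u v)) = Q \<and>
    st (take p (phi Q u v)) = u \<and> st (drop p (phi Q u v)) = v"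
proof -
  have lu: "length u = p" and lv: "length v = q" using u v Sn_length by auto
  define R where "R = {1..p + q} - Q"
  have fQ: "finite Q" using Q(1) finite_subset by blast
  have fR: "finite R" unfolding R_def by simp
  have cR: "card R = q" unfolding R_def using Q card_Diff_subset[OF fQ Q(1)] by simp
  define x0 where "x0 = map (\<lambda>i. sorted_list_of_set Q ! (i - 1)) u @ map (\<lambda>i. sorted_list_of_set R ! (i - 1)) v"
  note m1 = map_sl[OF u fQ Q(2)] and m2 = map_sl[OF v fR cR]
  have tk: "take p x0 = map (\<lambda>i. sorted_list_of_set Q ! (i - 1)) u" unfolding x0_def using lu by simp
  have dr: "drop p x0 = map (\<lambda>i. sorted_list_of_set R ! (i - 1)) v" unfolding x0_def using lu by simp
  have "x0 \<in> Sn (p + q)" unfolding Sn_def x0_def using m1 m2 Q(1) unfolding R_def by auto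
  then have P0: "x0 \<in> Sn (p + q) \<and> set (take p x0) = Q \<and> st (take p x0) = u \<and> st (drop p x0) = v"
    using tk dr m1 m2 by simp
  have "phi Q u v = x0" unfolding phi_def lu lv
  proof (rule the_equality)
    show "x0 \<in> Sn (p + q) \<and> set (take p x0) = Q \<and> st (take p x0) = u \<and> st (drop p x0) = v" by (rule P0)
    fix x assume "x \<in> Sn (p + q) \<and> set (take p x) = Q \<and> st (take p x) = u \<and> st (drop p x) = v"
    then show "x = x0" using phi_unique[of x "p + q" x0 p] P0 by auto
  qed
  then show ?thesis using P0 by simp
qed

lemma phi_of:
  assumes y: "y \<in> Sn n" and p: "p \<le> n"
  shows "phi (set (take p y)) (st (take p y)) (st (drop p y)) = y"
proof -
  have ly: "length y = n" using y Sn_length by blast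
  have l1: "length (st (take p y)) = p" using ly p by simp
  have l2: "length (st (drop p y)) = n - p" using ly by simp
  show ?thesis unfolding phi_def l1 l2
  proof (rule the_equality)
    show "y \<in> Sn (p + (n - p)) \<and> set (take p y) = set (take p y) \<and> st (take p y) = st (take p y) \<and> st (drop p y) = st (drop p y)"
      using y p by simp
    fix x assume "x \<in> Sn (p + (n - p)) \<and> set (take p x) = set (take p y) \<and> st (take p x) = st (take p y) \<and> st (drop p x) = st (drop p y)"
    then show "x = y" using phi_unique[of x n y p] y p by auto
  qed
qed

definition Cr :: "nat \<Rightarrow> nat \<Rightarrow> (nat \<times> nat) set" where
  "Cr n p = {(a, b). 1 \<le> a \<and> a \<le> p \<and> p < b \<and> b \<le> n}"

lemma Lp_perm: "\<exists>w\<in>Sn n. inv_set w = Pn n \<inter> Lp p"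
proof (rule construct)
  show "Pn n \<inter> Lp p \<subseteq> Pn n" by blast
  show "trans (Pn n \<inter> Lp p)" unfolding trans_def Pn_def Lp_def by auto
  show "cocl (Pn n \<inter> Lp p)" unfolding cocl_def Pn_def Lp_def by auto
qed

lemma Cr_perm:
  assumes S: "S \<subseteq> Pn n \<inter> Lp p" "trans S" "cocl S"
  shows "\<exists>w\<in>Sn n. inv_set w = S \<union> Cr n p"
proof (rule construct)
  show "S \<union> Cr n p \<subseteq> Pn n" using S(1) unfolding Cr_def Pn_def by auto
  have tS: "(a, b) \<in> S \<Longrightarrow> (b, c) \<in> S \<Longrightarrow> (a, c) \<in> S" for a b c using S(2) unfolding trans_def by blast
  have cS: "(a, c) \<in> S \<Longrightarrow> a < b \<Longrightarrow> b < c \<Longrightarrow> (a, b) \<in> S \<or> (b, c) \<in> S" for a b c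
    using S(3) unfolding cocl_def by blast
  have SL: "(a, b) \<in> S \<Longrightarrow> 1 \<le> a \<and> a < b \<and> b \<le> n \<and> (b \<le> p \<or> p < a)" for a b
    using S(1) unfolding Pn_def Lp_def by auto
  show "trans (S \<union> Cr n p)" unfolding trans_def
  proof (intro allI impI)
    fix a b c assume h: "(a, b) \<in> S \<union> Cr n p" "(b, c) \<in> S \<union> Cr n p"
    show "(a, c) \<in> S \<union> Cr n p"
    proof (cases "(a, b) \<in> S")
      case True
      show ?thesis
      proof (cases "(b, c) \<in> S")
        case True then show ?thesis using tS \<open>(a, b) \<in> S\<close> by blast
      next
        case False then show ?thesis using h SL[OF \<open>(a, b) \<in> S\<close>] unfolding Cr_def by auto
      qed
    next
      case False
      then have ab: "(a, b) \<in> Cr n p" using h by blast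
      show ?thesis
      proof (cases "(b, c) \<in> S")
        case True then show ?thesis using ab SL[OF True] unfolding Cr_def by auto
      next
        case False then show ?thesis using h ab unfolding Cr_def by auto
      qed
    qed
  qed
  show "cocl (S \<union> Cr n p)" unfolding cocl_def
  proof (intro allI impI)
    fix a b c assume h: "(a, c) \<in> S \<union> Cr n p" "a < b" "b < c"
    show "(a, b) \<in> S \<union> Cr n p \<or> (b, c) \<in> S \<union> Cr n p"
    proof (cases "(a, c) \<in> S")
      case True then show ?thesis using cS h by blast
    next
      case False then show ?thesis using h unfolding Cr_def by auto
    qed
  qed
qed

lemma Pn_split: "Pn n \<subseteq> Lp p \<union> Cr n p"
  unfolding Pn_def Lp_def Cr_def by auto

lemma Cr_Lp: "Cr n p \<inter> Lp p = {}"
  unfolding Lp_def Cr_def by auto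

lemma bar_wmeet:
  assumes x: "x \<in> Sn n" and p: "p \<le> n" and w: "w \<in> Sn n" "inv_set w = Pn n \<inter> Lp p"
  shows "wmeet n x w = bar p x"
proof -
  note mp = wmeet_props[OF x w(1)]
  have bS: "bar p x \<in> Sn n" by (rule bar_Sn[OF x p])
  have ib: "inv_set (bar p x) = inv_set x \<inter> Lp p" by (rule inv_bar[OF x p])
  have "weak_le (bar p x) (wmeet n x w)"
    using mp bS ib inv_Pn[OF x] w(2) unfolding weak_le_def by blast
  moreover have "weak_le (wmeet n x w) (bar p x)"
    using mp ib w(2) unfolding weak_le_def by blast
  ultimately show ?thesis using Sn_antisym bS mp by blast
qed

context hfam
begin

lemma bar_cong:
  assumes h: "(x, y) \<in> \<Theta> n" and p: "p \<le> n"
  shows "(bar p x, bar p y) \<in> \<Theta> n"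
proof -
  obtain w where w: "w \<in> Sn n" "inv_set w = Pn n \<inter> Lp p" using Lp_perm by blast
  have "(wmeet n x w, wmeet n y w) \<in> \<Theta> n" by (rule meet_cong[OF h w(1)])
  then show ?thesis using bar_wmeet[OF _ p w] th_Sn[OF h] by simp
qed

lemma key:
  assumes m: "m \<in> Zset \<Theta>" and p: "p \<le> length m"
  shows "bar p m \<in> Zset \<Theta>"
proof (rule ccontr)
  assume nz: "bar p m \<notin> Zset \<Theta>"
  define n where "n = length m"
  define t where "t = bar p m"
  have mS: "m \<in> Sn n" using Z_Sn[OF m] unfolding n_def .
  have pn: "p \<le> n" using p unfolding n_def .
  have tS: "t \<in> Sn n" unfolding t_def by (rule bar_Sn[OF mS pn])
  have lt: "length t = n" using Sn_length[OF tS] .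
  have it: "inv_set t = inv_set m \<inter> Lp p" unfolding t_def by (rule inv_bar[OF mS pn])
  define s where "s = pi_down \<Theta> t"
  have tS': "t \<in> Sn (length t)" using tS lt by simp
  have st: "(s, t) \<in> \<Theta> n" using pi_down_props[OF tS'] lt unfolding s_def by simp
  have sle: "weak_le s t" using pi_down_props[OF tS'] th_refl[OF tS'] unfolding s_def by blast
  have sS: "s \<in> Sn n" using th_Sn[OF st] by blast
  have sne: "s \<noteq> t"
  proof
    assume "s = t"
    then have "t \<in> Zset \<Theta>" unfolding Zset_def s_def using tS' by simp
    then show False using nz unfolding t_def by simp
  qed
  have isL: "inv_set s \<subseteq> Pn n \<inter> Lp p" using sle it inv_Pn[OF sS] unfolding weak_le_def by blast
  obtain z where z: "z \<in> Sn n" "inv_set z = {} \<union> Cr n p"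
    using Cr_perm[of "{}" n p] unfolding trans_def cocl_def by blast
  obtain w2 where w2: "w2 \<in> Sn n" "inv_set w2 = inv_set s \<union> Cr n p"
    using Cr_perm[OF isL inv_trans[OF Sn_distinct[OF sS]] inv_cocl[OF sS]] by blast
  define J1 where "J1 = wjoin n t z"
  define J2 where "J2 = wjoin n s z"
  have J12: "(J1, J2) \<in> \<Theta> n" unfolding J1_def J2_def by (rule join_cong[OF th_sym[OF st] z(1)])
  note j1 = wjoin_props[OF tS z(1), folded J1_def]
  note j2 = wjoin_props[OF sS z(1), folded J2_def]
  have mJ1: "weak_le m J1"
  proof -
    have "inv_set m \<subseteq> Lp p \<union> Cr n p" using inv_Pn[OF mS] Pn_split by blast
    then have "inv_set m \<subseteq> inv_set t \<union> inv_set z" using it z(2) by blast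
    then show ?thesis using j1 unfolding weak_le_def by blast
  qed
  have "(wmeet n J1 m, wmeet n J2 m) \<in> \<Theta> n" by (rule meet_cong[OF J12 mS])
  moreover have "wmeet n J1 m = m" by (rule wmeet_le[OF _ mS mJ1]) (use j1 in blast)
  ultimately have my: "(m, wmeet n J2 m) \<in> \<Theta> n" by simp
  define y where "y = wmeet n J2 m"
  note yp = wmeet_props[OF conjunct1[OF j2] mS, folded y_def]
  have "weak_le s w2" "weak_le z w2" unfolding weak_le_def using w2(2) z(2) by auto
  then have J2w: "weak_le J2 w2" using j2 w2(1) by blast
  have "weak_le m y" using Z_min[OF m] th_sym[OF my[folded y_def]] unfolding n_def by blast
  then have "inv_set m \<subseteq> inv_set s \<union> Cr n p" using yp J2w w2(2) unfolding weak_le_def by blast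
  then have "inv_set t \<subseteq> inv_set s" using it Cr_Lp by blast
  then have "weak_le t s" unfolding weak_le_def .
  then have "s = t" using Sn_antisym[OF sS tS sle] by blast
  then show False using sne by simp
qed

end

lemma shift_prod_filters:
  assumes u: "u \<in> Sn p" and v: "v \<in> Sn q"
  shows "filter (\<lambda>a. a \<le> p) (shift_prod u v) = u" "filter (\<lambda>a. p < a) (shift_prod u v) = map (\<lambda>b. p + b) v"
proof -
  have lu: "length u = p" using Sn_length[OF u] .
  have su: "set u = {1..p}" and sv: "set v = {1..q}" using u v by (auto simp: Sn_def)
  have f1: "filter (\<lambda>a. a \<le> p) u = u" using su by (auto intro: filter_True)
  have f2: "filter (\<lambda>a. a \<le> p) (map (\<lambda>b. p + b) v) = []" using sv by (auto simp: filter_empty_conv)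
  have f3: "filter (\<lambda>a. p < a) u = []" using su by (auto simp: filter_empty_conv)
  have f4: "filter (\<lambda>a. p < a) (map (\<lambda>b. p + b) v) = map (\<lambda>b. p + b) v" using sv by (auto intro: filter_True)
  show "filter (\<lambda>a. a \<le> p) (shift_prod u v) = u" unfolding shift_prod_def lu using f1 f2 by simp
  show "filter (\<lambda>a. p < a) (shift_prod u v) = map (\<lambda>b. p + b) v" unfolding shift_prod_def lu using f3 f4 by simp
qed

lemma shift_prod_Sn:
  assumes u: "u \<in> Sn p" and v: "v \<in> Sn q"
  shows "shift_prod u v \<in> Sn (p + q)"
proof -
  have lu: "length u = p" using Sn_length[OF u] .
  have su: "set u = {1..p}" and sv: "set v = {1..q}" and du: "distinct u" and dv: "distinct v"
    using u v by (auto simp: Sn_def)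
  have inj: "inj (\<lambda>b. p + (b::nat))" by (simp add: inj_def)
  have dm: "distinct (map (\<lambda>b. p + b) v)" using dv inj by (simp add: distinct_map inj_on_def)
  have sm: "set (map (\<lambda>b. p + b) v) = {Suc p..p + q}"
  proof -
    have "(\<lambda>b. p + b) ` {1..q} = {Suc p..p + q}"
    proof
      show "(\<lambda>b. p + b) ` {1..q} \<subseteq> {Suc p..p + q}" by auto
      show "{Suc p..p + q} \<subseteq> (\<lambda>b. p + b) ` {1..q}"
      proof
        fix c assume "c \<in> {Suc p..p + q}"
        then have "c = p + (c - p)" "c - p \<in> {1..q}" by auto
        then show "c \<in> (\<lambda>b. p + b) ` {1..q}" by blast
      qed
    qed
    then show ?thesis using sv by simp
  qed
  have "distinct (shift_prod u v)" unfolding shift_prod_def lu using du dm su sm by auto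
  moreover have "set (shift_prod u v) = {1..p + q}" unfolding shift_prod_def lu using su sm by auto
  ultimately show ?thesis unfolding Sn_def by simp
qed

lemma shift_prod_inj:
  assumes "length u = length u'" "shift_prod u v = shift_prod u' v'"
  shows "u = u' \<and> v = v'"
proof -
  have "u = u' \<and> map (\<lambda>b. length u + b) v = map (\<lambda>b. length u + b) v'"
    using assms unfolding shift_prod_def by simp
  moreover have "inj (\<lambda>b. length u + (b::nat))" by (simp add: inj_def)
  ultimately show ?thesis by (simp add: inj_map_eq_map)
qed

lemma inv_low_shift:
  assumes u: "u \<in> Sn p" and v: "v \<in> Sn q"
  shows "inv_set u = inv_set (shift_prod u v) \<inter> {(a, b). a \<le> p \<and> b \<le> p}"
  using inv_filter[of "\<lambda>a. a \<le> p" "shift_prod u v"] shift_prod_filters[OF u v] by simp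

lemma inv_high_shift:
  assumes u: "u \<in> Sn p" and v: "v \<in> Sn q"
  shows "inv_set (map (\<lambda>b. p + b) v) = inv_set (shift_prod u v) \<inter> {(a, b). p < a \<and> p < b}"
  using inv_filter[of "\<lambda>a. p < a" "shift_prod u v"] shift_prod_filters[OF u v] by simp

context hfam
begin

lemma transl_iff:
  assumes "u \<in> Sn p" "u' \<in> Sn p" "v \<in> Sn q" "v' \<in> Sn q"
  shows "(shift_prod u v, shift_prod u' v') \<in> \<Theta> (p + q) \<longleftrightarrow> (u, u') \<in> \<Theta> p \<and> (v, v') \<in> \<Theta> q"
  using transl assms unfolding translational_def by blast

lemma Z_components:
  assumes u: "u \<in> Sn p" and v: "v \<in> Sn q" and Z: "shift_prod u v \<in> Zset \<Theta>"
  shows "u \<in> Zset \<Theta> \<and> v \<in> Zset \<Theta>"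
proof -
  have lu: "length u = p" and lv: "length v = q" using u v Sn_length by auto
  have lsp: "length (shift_prod u v) = p + q" using Sn_length[OF shift_prod_Sn[OF u v]] .
  have uS: "u \<in> Sn (length u)" and vS: "v \<in> Sn (length v)" using u v lu lv by auto
  define m where "m = pi_down \<Theta> u"
  have mu: "(m, u) \<in> \<Theta> p" using pi_down_props[OF uS] lu unfolding m_def by simp
  have mle: "weak_le m u" using pi_down_props[OF uS] th_refl[OF uS] unfolding m_def by blast
  have mS: "m \<in> Sn p" using th_Sn[OF mu] by blast
  have "(shift_prod m v, shift_prod u v) \<in> \<Theta> (p + q)"
    using transl_iff[OF mS u v v] mu th_refl[OF v] by blast
  then have "weak_le (shift_prod u v) (shift_prod m v)" using Z_min[OF Z] lsp by simp
  then have "inv_set u \<subseteq> inv_set m"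
    using inv_low_shift[OF u v] inv_low_shift[OF mS v] unfolding weak_le_def by blast
  then have "m = u" using Sn_antisym[OF mS u mle] unfolding weak_le_def by blast
  then have uZ: "u \<in> Zset \<Theta>" unfolding Zset_def m_def using uS by simp
  define m' where "m' = pi_down \<Theta> v"
  have mv: "(m', v) \<in> \<Theta> q" using pi_down_props[OF vS] lv unfolding m'_def by simp
  have mle': "weak_le m' v" using pi_down_props[OF vS] th_refl[OF vS] unfolding m'_def by blast
  have mS': "m' \<in> Sn q" using th_Sn[OF mv] by blast
  have "(shift_prod u m', shift_prod u v) \<in> \<Theta> (p + q)"
    using transl_iff[OF u u mS' v] mv th_refl[OF u] by blast
  then have "weak_le (shift_prod u v) (shift_prod u m')" using Z_min[OF Z] lsp by simp
  then have "inv_set (map (\<lambda>b. p + b) v) \<subseteq> inv_set (map (\<lambda>b. p + b) m')"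
    using inv_high_shift[OF u v] inv_high_shift[OF u mS'] unfolding weak_le_def by blast
  then have "inv_set v \<subseteq> inv_set m'"
    unfolding subset_iff using inv_map_shift[of _ _ p v] inv_map_shift[of _ _ p m'] by force
  then have "m' = v" using Sn_antisym[OF mS' v mle'] unfolding weak_le_def by blast
  then have vZ: "v \<in> Zset \<Theta>" unfolding Zset_def m'_def using vS by simp
  show ?thesis using uZ vZ by simp
qed

end

definition lowst :: "nat \<Rightarrow> nat list \<Rightarrow> nat list" where
  "lowst p y = st (filter (\<lambda>a. a \<le> p) y)"
definition highst :: "nat \<Rightarrow> nat list \<Rightarrow> nat list" where
  "highst p y = st (filter (\<lambda>a. p < a) y)"

lemma bar_lh: "bar p y = shift_prod (lowst p y) (highst p y)"
  unfolding bar_def lowst_def highst_def ..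

lemma lowst_Sn:
  assumes y: "y \<in> Sn n" and p: "p \<le> n"
  shows "lowst p y \<in> Sn p" "highst p y \<in> Sn (n - p)"
proof -
  note lp = low_props[OF y p]
  show "lowst p y \<in> Sn p" unfolding lowst_def using st_Sn[OF lp(1)] lp(3) by simp
  show "highst p y \<in> Sn (n - p)" unfolding highst_def using st_Sn[OF lp(4)] lp(6) by simp
qed

context hfam
begin

lemma pi_low_high:
  assumes x: "x \<in> Sn n" and p: "p \<le> n"
  shows "pi_down \<Theta> (lowst p x) = lowst p (pi_down \<Theta> x) \<and> pi_down \<Theta> (highst p x) = highst p (pi_down \<Theta> x)"
proof -
  have lx: "length x = n" using Sn_length[OF x] .
  have xS: "x \<in> Sn (length x)" using x lx by simp
  define y where "y = pi_down \<Theta> x"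
  have yx: "(y, x) \<in> \<Theta> n" using pi_down_props[OF xS] lx unfolding y_def by simp
  have yS: "y \<in> Sn n" using th_Sn[OF yx] by blast
  have yZ: "y \<in> Zset \<Theta>" unfolding y_def by (rule pi_down_Z[OF xS])
  have ly: "length y = n" using Sn_length[OF yS] .
  have bZ: "bar p y \<in> Zset \<Theta>" using key[OF yZ] p ly by simp
  note Ly = lowst_Sn[OF yS p] and Lx = lowst_Sn[OF x p]
  have ZZ: "lowst p y \<in> Zset \<Theta> \<and> highst p y \<in> Zset \<Theta>"
    using Z_components[OF Ly] bZ unfolding bar_lh by simp
  have "(bar p y, bar p x) \<in> \<Theta> n" by (rule bar_cong[OF yx p])
  then have "(shift_prod (lowst p y) (highst p y), shift_prod (lowst p x) (highst p x)) \<in> \<Theta> (p + (n - p))"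
    unfolding bar_lh using p by simp
  then have c: "(lowst p y, lowst p x) \<in> \<Theta> p" "(highst p y, highst p x) \<in> \<Theta> (n - p)"
    using transl_iff[OF Ly(1) Lx(1) Ly(2) Lx(2)] by blast+
  have l1: "length (lowst p y) = p" using Sn_length[OF Ly(1)] .
  have l2: "length (highst p y) = n - p" using Sn_length[OF Ly(2)] .
  have "pi_down \<Theta> (lowst p x) = lowst p y"
    using Z_eq[of "lowst p y" "lowst p x"] ZZ th_sym[OF c(1)] l1 by simp
  moreover have "pi_down \<Theta> (highst p x) = highst p y"
    using Z_eq[of "highst p y" "highst p x"] ZZ th_sym[OF c(2)] l2 by simp
  ultimately show ?thesis unfolding y_def by simp
qed

end

lemma reindex_R:
  fixes F :: "nat list \<Rightarrow> nat list \<Rightarrow> 'k::comm_monoid_add"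
  assumes y: "y \<in> Sn n" and U: "finite U" and V: "finite V"
   and h1: "\<And>u v. u \<in> U \<Longrightarrow> v \<in> V \<Longrightarrow> F u v \<noteq> 0 \<Longrightarrow> length u + length v = n \<and> bar (length u) y = shift_prod u v"
   and h2: "\<And>p. p \<le> n \<Longrightarrow> F (lowst p y) (highst p y) \<noteq> 0 \<Longrightarrow> lowst p y \<in> U \<and> highst p y \<in> V"
  shows "(\<Sum>u\<in>U. \<Sum>v\<in>V. F u v) = (\<Sum>p\<in>{0..n}. F (lowst p y) (highst p y))"
proof -
  define h where "h p = (lowst p y, highst p y)" for p
  define K where "K = h ` {0..n}"
  have lenl: "p \<le> n \<Longrightarrow> length (lowst p y) = p" for p using Sn_length lowst_Sn[OF y] by blast
  have injh: "inj_on h {0..n}"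
  proof (rule inj_onI)
    fix p p' assume "p \<in> {0..n}" "p' \<in> {0..n}" "h p = h p'"
    then show "p = p'" unfolding h_def using lenl by (metis atLeastAtMost_iff prod.inject)
  qed
  have finK: "finite K" unfolding K_def by simp
  have "(\<Sum>u\<in>U. \<Sum>v\<in>V. F u v) = (\<Sum>uv\<in>U \<times> V. case_prod F uv)" by (simp add: sum.cartesian_product)
  also have "\<dots> = (\<Sum>uv\<in>(U \<times> V) \<inter> K. case_prod F uv)"
  proof (rule sum.mono_neutral_right)
    show "finite (U \<times> V)" using U V by simp
    show "U \<times> V \<inter> K \<subseteq> U \<times> V" by blast
    show "\<forall>i\<in>U \<times> V - U \<times> V \<inter> K. case_prod F i = 0"
    proof
      fix uv assume uv: "uv \<in> U \<times> V - U \<times> V \<inter> K"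
      obtain u v where uvd: "uv = (u, v)" by (cases uv)
      show "case_prod F uv = 0"
      proof (rule ccontr)
        assume "case_prod F uv \<noteq> 0"
        then have F0: "F u v \<noteq> 0" using uvd by simp
        have inUV: "u \<in> U" "v \<in> V" using uv uvd by auto
        have hh: "length u + length v = n" "bar (length u) y = shift_prod u v" using h1[OF inUV F0] by auto
        define p where "p = length u"
        have pn: "p \<le> n" using hh unfolding p_def by simp
        have "shift_prod (lowst p y) (highst p y) = shift_prod u v" using hh(2) unfolding bar_lh p_def .
        then have "lowst p y = u \<and> highst p y = v" using shift_prod_inj lenl[OF pn] unfolding p_def by metis
        then have "uv \<in> K" unfolding K_def h_def uvd using pn by force
        then show False using uv by blast
      qed
    qed
  qed
  also have "\<dots> = (\<Sum>uv\<in>K. case_prod F uv)"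
  proof (rule sum.mono_neutral_left)
    show "finite K" by (rule finK)
    show "U \<times> V \<inter> K \<subseteq> K" by blast
    show "\<forall>i\<in>K - U \<times> V \<inter> K. case_prod F i = 0"
    proof
      fix uv assume uv: "uv \<in> K - U \<times> V \<inter> K"
      then obtain p where p: "p \<in> {0..n}" "uv = h p" unfolding K_def by blast
      show "case_prod F uv = 0"
      proof (rule ccontr)
        assume "case_prod F uv \<noteq> 0"
        then have "F (lowst p y) (highst p y) \<noteq> 0" using p unfolding h_def by simp
        then have "lowst p y \<in> U \<and> highst p y \<in> V" using h2 p by simp
        then show False using uv p unfolding h_def by simp
      qed
    qed
  qed
  also have "\<dots> = (\<Sum>p\<in>{0..n}. case_prod F (h p))" unfolding K_def by (simp add: sum.reindex[OF injh])
  finally show ?thesis unfolding h_def by simp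
qed

lemma sum_nz_ex:
  assumes "(\<Sum>u\<in>A. g u) \<noteq> (0::'k::comm_monoid_add)"
  shows "\<exists>u\<in>A. g u \<noteq> 0"
proof (rule ccontr)
  assume "\<not> (\<exists>u\<in>A. g u \<noteq> 0)"
  then have "\<forall>u\<in>A. g u = 0" by blast
  then have "sum g A = 0" by (rule sum.neutral)
  then show False using assms by simp
qed

context hfam
begin

lemma cmap_KS:
  assumes f: "f \<in> KZ \<Theta>"
  shows "(cmap \<Theta> f :: nat list \<Rightarrow> 'k::field) \<in> KS"
proof -
  have fin: "finite (supp f)" using f unfolding KZ_def by simp
  have sub: "supp (cmap \<Theta> f) \<subseteq> (\<Union>z\<in>supp f. Sn (length z))"
  proof
    fix x assume "x \<in> supp (cmap \<Theta> f)"
    then have nz: "cmap \<Theta> f x \<noteq> 0" unfolding supp_def by simp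
    have xS: "x \<in> Sn (length x)" using nz cmap_formula[OF f, of x] by (cases "x \<in> Sn (length x)") simp_all
    have fx: "pi_down \<Theta> x \<in> supp f" using nz cmap_formula[OF f, of x] xS unfolding supp_def by simp
    have pp: "(pi_down \<Theta> x, x) \<in> \<Theta> (length x)" using conjunct1[OF pi_down_props[OF xS]] .
    have "length (pi_down \<Theta> x) = length x" using conjunct1[OF th_len[OF pp]] .
    then have "x \<in> Sn (length (pi_down \<Theta> x))" using xS by simp
    then show "x \<in> (\<Union>z\<in>supp f. Sn (length z))" using fx by (rule UN_I[rotated])
  qed
  have "finite (\<Union>z\<in>supp f. Sn (length z))" using fin finite_Sn by blast
  then have "finite (supp (cmap \<Theta> f))" using sub by (rule finite_subset[rotated])
  moreover have "\<forall>x\<in>supp (cmap \<Theta> f). x \<in> Sn (length x)"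
  proof
    fix x assume "x \<in> supp (cmap \<Theta> f)"
    then have nz: "cmap \<Theta> f x \<noteq> 0" unfolding supp_def by simp
    show "x \<in> Sn (length x)" using nz cmap_formula[OF f, of x] by (cases "x \<in> Sn (length x)") simp_all
  qed
  ultimately show ?thesis unfolding KS_def by simp
qed

lemma mulZ_KZ:
  assumes f: "f \<in> KZ \<Theta>" and g: "g \<in> KZ \<Theta>"
  shows "(mulZ \<Theta> f g :: nat list \<Rightarrow> 'k::field) \<in> KZ \<Theta>"
proof -
  have fin: "finite (supp f)" "finite (supp g)" using f g unfolding KZ_def by auto
  have ex: "\<exists>u\<in>supp f. \<exists>v\<in>supp g. (prodZ_basis \<Theta> u v x :: 'k) \<noteq> 0" if "x \<in> supp (mulZ \<Theta> f g)" for x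
  proof -
    have "(\<Sum>u\<in>supp f. \<Sum>v\<in>supp g. f u * g v * prodZ_basis \<Theta> u v x) \<noteq> (0::'k)"
      using that unfolding supp_def mulZ_def by simp
    then obtain u where u: "u \<in> supp f" "(\<Sum>v\<in>supp g. f u * g v * prodZ_basis \<Theta> u v x) \<noteq> (0::'k)"
      using sum_nz_ex by blast
    then obtain v where v: "v \<in> supp g" "f u * g v * prodZ_basis \<Theta> u v x \<noteq> (0::'k)"
      using sum_nz_ex by blast
    then show ?thesis using u by auto
  qed
  have sub: "supp (mulZ \<Theta> f g) \<subseteq> (\<Union>u\<in>supp f. \<Union>v\<in>supp g. Sn (length u + length v)) \<inter> Zset \<Theta>"
  proof
    fix x assume "x \<in> supp (mulZ \<Theta> f g)"
    then obtain u v where uv: "u \<in> supp f" "v \<in> supp g" "(prodZ_basis \<Theta> u v x :: 'k) \<noteq> 0" using ex by blast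
    then have "x \<in> Zset \<Theta>" "length x = length u + length v" unfolding prodZ_basis_def by (auto split: if_splits)
    then show "x \<in> (\<Union>u\<in>supp f. \<Union>v\<in>supp g. Sn (length u + length v)) \<inter> Zset \<Theta>"
      using uv Z_Sn by fastforce
  qed
  have "finite (supp (mulZ \<Theta> f g :: nat list \<Rightarrow> 'k))"
    by (rule finite_subset[OF sub]) (use fin finite_Sn in blast)
  then show ?thesis unfolding KZ_def using sub by blast
qed

lemma prod_eq:
  assumes f: "f \<in> KZ \<Theta>" and g: "g \<in> KZ \<Theta>"
  shows "(cmap \<Theta> (mulZ \<Theta> f g) :: nat list \<Rightarrow> 'k::field) = mulS (cmap \<Theta> f) (cmap \<Theta> g)"
proof
  fix x
  have mKZ: "(mulZ \<Theta> f g :: nat list \<Rightarrow> 'k) \<in> KZ \<Theta>" by (rule mulZ_KZ[OF f g])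
  have finf: "finite (supp (cmap \<Theta> f :: nat list \<Rightarrow> 'k))" and fing: "finite (supp (cmap \<Theta> g :: nat list \<Rightarrow> 'k))"
    using cmap_KS[OF f] cmap_KS[OF g] unfolding KS_def by auto
  show "(cmap \<Theta> (mulZ \<Theta> f g) :: nat list \<Rightarrow> 'k) x = mulS (cmap \<Theta> f) (cmap \<Theta> g) x"
  proof (cases "x \<in> Sn (length x)")
    case False
    have "(prodS_basis u v x :: 'k) = 0" for u v
      using False Sn_length unfolding prodS_basis_def by fastforce
    then have "mulS (cmap \<Theta> f) (cmap \<Theta> g) x = (0::'k)" unfolding mulS_def by simp
    then show ?thesis using cmap_formula[OF mKZ, of x] False by simp
  next
    case True
    define n where "n = length x"
    have xS: "x \<in> Sn n" using True unfolding n_def by simp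
    define y where "y = pi_down \<Theta> x"
    have yx: "(y, x) \<in> \<Theta> n" using pi_down_props[OF True] unfolding y_def n_def by simp
    have yS: "y \<in> Sn n" using th_Sn[OF yx] by blast
    have yZ: "y \<in> Zset \<Theta>" unfolding y_def by (rule pi_down_Z[OF True])
    have ly: "length y = n" using Sn_length[OF yS] .
    have fin: "finite (supp f)" "finite (supp g)" using f g unfolding KZ_def by auto
    have "(cmap \<Theta> (mulZ \<Theta> f g) :: nat list \<Rightarrow> 'k) x = mulZ \<Theta> f g y"
      using cmap_formula[OF mKZ, of x] True unfolding y_def by simp
    also have "\<dots> = (\<Sum>p\<in>{0..n}. f (lowst p y) * g (highst p y) * prodZ_basis \<Theta> (lowst p y) (highst p y) y)"
      unfolding mulZ_def
    proof (rule reindex_R[OF yS fin])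
      fix u v assume "f u * g v * prodZ_basis \<Theta> u v y \<noteq> (0::'k)"
      then show "length u + length v = n \<and> bar (length u) y = shift_prod u v"
        using ly unfolding prodZ_basis_def by (auto split: if_splits)
    next
      fix p assume "f (lowst p y) * g (highst p y) * prodZ_basis \<Theta> (lowst p y) (highst p y) y \<noteq> (0::'k)"
      then show "lowst p y \<in> supp f \<and> highst p y \<in> supp g" unfolding supp_def by auto
    qed
    also have "\<dots> = (\<Sum>p\<in>{0..n}. f (lowst p y) * g (highst p y))"
    proof (rule sum.cong[OF refl])
      fix p assume p: "p \<in> {0..n}"
      note L = lowst_Sn[OF yS, of p]
      have "length (lowst p y) = p" "length (highst p y) = n - p" using L p Sn_length by auto
      then have "(prodZ_basis \<Theta> (lowst p y) (highst p y) y :: 'k) = 1"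
        unfolding prodZ_basis_def using yZ ly p bar_lh by simp
      then show "f (lowst p y) * g (highst p y) * prodZ_basis \<Theta> (lowst p y) (highst p y) y = f (lowst p y) * g (highst p y)"
        by simp
    qed
    also have "\<dots> = (\<Sum>p\<in>{0..n}. (cmap \<Theta> f) (lowst p x) * (cmap \<Theta> g) (highst p x) * prodS_basis (lowst p x) (highst p x) x)"
    proof (rule sum.cong[OF refl])
      fix p assume p: "p \<in> {0..n}"
      note L = lowst_Sn[OF xS, of p]
      have l: "length (lowst p x) = p" "length (highst p x) = n - p" using L p Sn_length by auto
      then have "(prodS_basis (lowst p x) (highst p x) x :: 'k) = 1"
        unfolding prodS_basis_def using xS p bar_lh by simp
      moreover have "cmap \<Theta> f (lowst p x) = f (lowst p y)"
        using cmap_formula[OF f, of "lowst p x"] L l p pi_low_high[OF xS, of p] unfolding y_def by simp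
      moreover have "cmap \<Theta> g (highst p x) = g (highst p y)"
        using cmap_formula[OF g, of "highst p x"] L l p pi_low_high[OF xS, of p] unfolding y_def by simp
      ultimately show "f (lowst p y) * g (highst p y) = (cmap \<Theta> f) (lowst p x) * (cmap \<Theta> g) (highst p x) * prodS_basis (lowst p x) (highst p x) x"
        by simp
    qed
    also have "\<dots> = mulS (cmap \<Theta> f) (cmap \<Theta> g) x"
      unfolding mulS_def
    proof (rule reindex_R[OF xS finf fing, symmetric])
      fix u v assume "cmap \<Theta> f u * cmap \<Theta> g v * prodS_basis u v x \<noteq> (0::'k)"
      then show "length u + length v = n \<and> bar (length u) x = shift_prod u v"
        using Sn_length unfolding prodS_basis_def n_def by (auto split: if_splits)
    next
      fix p assume "cmap \<Theta> f (lowst p x) * cmap \<Theta> g (highst p x) * prodS_basis (lowst p x) (highst p x) x \<noteq> (0::'k)"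
      then show "lowst p x \<in> supp (cmap \<Theta> f) \<and> highst p x \<in> supp (cmap \<Theta> g)" unfolding supp_def by auto
    qed
    finally show ?thesis .
  qed
qed

end

lemma cop_iff: "(coprodS_basis y (a, b) :: 'k::field) =
  of_bool (length a \<le> length y \<and> a = st (take (length a) y) \<and> b = st (drop (length a) y))"
proof -
  have "(\<exists>p\<le>length y. a = st (take p y) \<and> b = st (drop p y)) \<longleftrightarrow>
    (length a \<le> length y \<and> a = st (take (length a) y) \<and> b = st (drop (length a) y))"
  proof
    assume "\<exists>p\<le>length y. a = st (take p y) \<and> b = st (drop p y)"
    then obtain p where p: "p \<le> length y" "a = st (take p y)" "b = st (drop p y)" by blast
    then have "length a = p" by simp
    then show "length a \<le> length y \<and> a = st (take (length a) y) \<and> b = st (drop (length a) y)" using p by simp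
  next
    assume "length a \<le> length y \<and> a = st (take (length a) y) \<and> b = st (drop (length a) y)"
    then show "\<exists>p\<le>length y. a = st (take p y) \<and> b = st (drop p y)" by blast
  qed
  then show ?thesis unfolding coprodS_basis_def by simp
qed

context hfam
begin

lemma DS_finite:
  assumes f: "f \<in> KZ \<Theta>"
  shows "finite (supp (DeltaS (cmap \<Theta> f :: nat list \<Rightarrow> 'k::field)))"
proof -
  let ?cf = "cmap \<Theta> f :: nat list \<Rightarrow> 'k"
  have fin: "finite (supp ?cf)" using cmap_KS[OF f] unfolding KS_def by simp
  have sub: "supp (DeltaS ?cf) \<subseteq> (\<Union>y\<in>supp ?cf. (\<lambda>k. (st (take k y), st (drop k y))) ` {0..length y})"
  proof
    fix ab assume "ab \<in> supp (DeltaS ?cf)"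
    then have "(\<Sum>x\<in>supp ?cf. ?cf x * coprodS_basis x ab) \<noteq> 0" unfolding supp_def DeltaS_def by simp
    then obtain y where y: "y \<in> supp ?cf" "?cf y * coprodS_basis y ab \<noteq> 0" using sum_nz_ex by blast
    obtain a b where ab: "ab = (a, b)" by (cases ab)
    have "(coprodS_basis y (a, b) :: 'k) \<noteq> 0" using y(2) ab by auto
    then obtain k where "k \<le> length y" "a = st (take k y)" "b = st (drop k y)"
      unfolding coprodS_basis_def by (auto split: if_splits)
    then have "ab \<in> (\<lambda>k. (st (take k y), st (drop k y))) ` {0..length y}" using ab by auto
    then show "ab \<in> (\<Union>y\<in>supp ?cf. (\<lambda>k. (st (take k y), st (drop k y))) ` {0..length y})" using y(1) by blast
  qed
  show ?thesis by (rule finite_subset[OF sub]) (use fin in blast)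
qed

lemma DS_zero:
  assumes f: "f \<in> KZ \<Theta>" and nab: "\<not> (a \<in> Sn (length a) \<and> b \<in> Sn (length b))"
  shows "DeltaS (cmap \<Theta> f :: nat list \<Rightarrow> 'k::field) (a, b) = 0"
proof -
  let ?cf = "cmap \<Theta> f :: nat list \<Rightarrow> 'k"
  have "?cf y * coprodS_basis y (a, b) = 0" if y: "y \<in> supp ?cf" for y
  proof (rule ccontr)
    assume "?cf y * coprodS_basis y (a, b) \<noteq> 0"
    then have "(coprodS_basis y (a, b) :: 'k) \<noteq> 0" by auto
    then obtain k where k: "k \<le> length y" "a = st (take k y)" "b = st (drop k y)"
      unfolding coprodS_basis_def by (auto split: if_splits)
    have "y \<in> Sn (length y)" using cmap_KS[OF f] y unfolding KS_def by blast
    then have d: "distinct y" by (rule Sn_distinct)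
    have "a \<in> Sn (length a)" using k(2) st_Sn[of "take k y"] d by simp
    moreover have "b \<in> Sn (length b)" using k(3) st_Sn[of "drop k y"] d by simp
    ultimately show False using nab by blast
  qed
  then show ?thesis unfolding DeltaS_def by (simp add: sum.neutral)
qed

lemma DS_phi:
  assumes f: "f \<in> KZ \<Theta>" and a: "a \<in> Sn p" and b: "b \<in> Sn q"
  shows "DeltaS (cmap \<Theta> f :: nat list \<Rightarrow> 'k::field) (a, b) =
    (\<Sum>Q\<in>{Q. Q \<subseteq> {1..p + q} \<and> card Q = p}. f (pi_down \<Theta> (phi Q a b)))"
proof -
  let ?cf = "cmap \<Theta> f :: nat list \<Rightarrow> 'k"
  define n where "n = p + q"
  define Y where "Y = {y \<in> Sn n. st (take p y) = a \<and> st (drop p y) = b}"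
  define T where "T y = ?cf y * coprodS_basis y (a, b)" for y
  have la: "length a = p" and lb: "length b = q" using a b Sn_length by auto
  have fin: "finite (supp ?cf)" using cmap_KS[OF f] unfolding KS_def by simp
  have finY: "finite Y" unfolding Y_def using finite_Sn by simp
  have TY: "T y \<noteq> 0 \<Longrightarrow> y \<in> Y" for y
  proof -
    assume nz: "T y \<noteq> 0"
    then have c: "?cf y \<noteq> 0" "(coprodS_basis y (a, b) :: 'k) \<noteq> 0" unfolding T_def by auto
    have yS: "y \<in> Sn (length y)" using c(1) cmap_formula[OF f, of y] by (cases "y \<in> Sn (length y)") simp_all
    have cc: "p \<le> length y" "a = st (take p y)" "b = st (drop p y)"
      using c(2) unfolding cop_iff la by (auto split: if_splits)
    have "length b = length y - p" using cc(3) by simp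
    then have "length y = n" using lb cc(1) unfolding n_def by linarith
    then show "y \<in> Y" unfolding Y_def using yS cc by simp
  qed
  have TY2: "y \<in> Y \<Longrightarrow> T y = f (pi_down \<Theta> y)" for y
  proof -
    assume y: "y \<in> Y"
    then have yS: "y \<in> Sn n" and ly: "length y = n" unfolding Y_def using Sn_length by auto
    have "(coprodS_basis y (a, b) :: 'k) = 1" unfolding cop_iff la using y ly unfolding Y_def n_def by auto
    moreover have "?cf y = f (pi_down \<Theta> y)" using cmap_formula[OF f, of y] yS ly by simp
    ultimately show ?thesis unfolding T_def by simp
  qed
  have "DeltaS ?cf (a, b) = (\<Sum>y\<in>supp ?cf. T y)" unfolding DeltaS_def T_def ..
  also have "\<dots> = (\<Sum>y\<in>supp ?cf \<inter> Y. T y)"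
  proof (rule sum.mono_neutral_right[OF fin])
    show "supp ?cf \<inter> Y \<subseteq> supp ?cf" by blast
    show "\<forall>i\<in>supp ?cf - supp ?cf \<inter> Y. T i = 0" using TY by blast
  qed
  also have "\<dots> = (\<Sum>y\<in>Y. T y)"
  proof (rule sum.mono_neutral_left[OF finY])
    show "supp ?cf \<inter> Y \<subseteq> Y" by blast
    show "\<forall>i\<in>Y - supp ?cf \<inter> Y. T i = 0"
    proof
      fix i assume "i \<in> Y - supp ?cf \<inter> Y"
      then have "?cf i = 0" unfolding supp_def by blast
      then show "T i = 0" unfolding T_def by simp
    qed
  qed
  also have "\<dots> = (\<Sum>y\<in>Y. f (pi_down \<Theta> y))" by (rule sum.cong[OF refl]) (rule TY2)
  also have "\<dots> = (\<Sum>Q\<in>{Q. Q \<subseteq> {1..p + q} \<and> card Q = p}. f (pi_down \<Theta> (phi Q a b)))"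
  proof (rule sum.reindex_bij_betw[symmetric])
    show "bij_betw (\<lambda>Q. phi Q a b) {Q. Q \<subseteq> {1..p + q} \<and> card Q = p} Y"
    proof (rule bij_betw_imageI)
      show "inj_on (\<lambda>Q. phi Q a b) {Q. Q \<subseteq> {1..p + q} \<and> card Q = p}"
      proof (rule inj_onI)
        fix Q Q' assume hQ: "Q \<in> {Q. Q \<subseteq> {1..p + q} \<and> card Q = p}" and hQ': "Q' \<in> {Q. Q \<subseteq> {1..p + q} \<and> card Q = p}"
          and e: "phi Q a b = phi Q' a b"
        have h1: "Q \<subseteq> {1..p + q}" "card Q = p" using hQ by simp_all
        have h2: "Q' \<subseteq> {1..p + q}" "card Q' = p" using hQ' by simp_all
        have A: "set (take p (phi Q a b)) = Q" using conjunct1[OF conjunct2[OF phi_props[OF h1 a b]]] .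
        have B: "set (take p (phi Q' a b)) = Q'" using conjunct1[OF conjunct2[OF phi_props[OF h2 a b]]] .
        have C: "set (take p (phi Q a b)) = set (take p (phi Q' a b))" using e by (rule arg_cong)
        show "Q = Q'" by (rule trans[OF sym[OF A] trans[OF C B]])
      qed
      show "(\<lambda>Q. phi Q a b) ` {Q. Q \<subseteq> {1..p + q} \<and> card Q = p} = Y"
      proof
        show "(\<lambda>Q. phi Q a b) ` {Q. Q \<subseteq> {1..p + q} \<and> card Q = p} \<subseteq> Y"
        proof
          fix y assume "y \<in> (\<lambda>Q. phi Q a b) ` {Q. Q \<subseteq> {1..p + q} \<and> card Q = p}"
          then obtain Q where Q: "Q \<subseteq> {1..p + q}" "card Q = p" "y = phi Q a b" by blast
          show "y \<in> Y" unfolding Y_def n_def Q(3) using phi_props[OF Q(1,2) a b] by blast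
        qed
        show "Y \<subseteq> (\<lambda>Q. phi Q a b) ` {Q. Q \<subseteq> {1..p + q} \<and> card Q = p}"
        proof
          fix y assume y: "y \<in> Y"
          then have yS: "y \<in> Sn n" and ly: "length y = n" and ya: "st (take p y) = a" and yb: "st (drop p y) = b"
            unfolding Y_def using Sn_length by auto
          have pn: "p \<le> n" unfolding n_def by simp
          have d: "distinct (take p y)" using Sn_distinct[OF yS] by simp
          have "set (take p y) \<subseteq> set y" by (rule set_take_subset)
          then have Qs: "set (take p y) \<subseteq> {1..p + q}" using Sn_set[OF yS] unfolding n_def by simp
          have Qc: "card (set (take p y)) = p" using distinct_card[OF d] ly pn by simp
          have "y = phi (set (take p y)) a b" using phi_of[OF yS pn] ya yb by simp
          moreover have "set (take p y) \<in> {Q. Q \<subseteq> {1..p + q} \<and> card Q = p}" using Qs Qc by simp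
          ultimately show "y \<in> (\<lambda>Q. phi Q a b) ` {Q. Q \<subseteq> {1..p + q} \<and> card Q = p}" by (rule rev_image_eqI[rotated])
        qed
      qed
    qed
  qed
  finally show ?thesis .
qed



lemma coprod_eq:
  assumes f: "f \<in> KZ \<Theta>"
  shows "(DeltaS (cmap \<Theta> f) :: nat list \<times> nat list \<Rightarrow> 'k::field) = cc_map \<Theta> (DeltaZ \<Theta> f)"
proof
  fix ab :: "nat list \<times> nat list"
  obtain a b where ab: "ab = (a, b)" by (cases ab)
  let ?DS = "DeltaS (cmap \<Theta> f) :: nat list \<times> nat list \<Rightarrow> 'k"
  let ?G = "DeltaZ \<Theta> f :: nat list \<times> nat list \<Rightarrow> 'k"
  have Gd: "?G zw = (if fst zw \<in> Zset \<Theta> \<and> snd zw \<in> Zset \<Theta> then ?DS zw else 0)" for zw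
    unfolding DeltaZ_def rr_map_def by (cases zw) simp
  have finG: "finite (supp ?G)"
  proof (rule finite_subset[OF _ DS_finite[OF f]])
    show "supp ?G \<subseteq> supp ?DS" unfolding supp_def using Gd by auto
  qed
  have "cc_map \<Theta> ?G (a, b) = (\<Sum>zw\<in>supp ?G. ?G zw *
      of_bool ((a, fst zw) \<in> \<Theta> (length (fst zw)) \<and> (b, snd zw) \<in> \<Theta> (length (snd zw))))"
    unfolding cc_map_def by simp
  also have "\<dots> = (\<Sum>zw\<in>supp ?G. if zw = (pi_down \<Theta> a, pi_down \<Theta> b) then
      (if a \<in> Sn (length a) \<and> b \<in> Sn (length b) then ?G zw else 0) else 0)"
  proof (rule sum.cong[OF refl])
    fix zw assume zwG: "zw \<in> supp ?G"
    obtain z w where zw: "zw = (z, w)" by (cases zw)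
    have "?G zw \<noteq> 0" using zwG unfolding supp_def by simp
    then have Z: "z \<in> Zset \<Theta>" "w \<in> Zset \<Theta>" using Gd[of zw] unfolding zw by (auto split: if_splits)
    have e1: "(a, z) \<in> \<Theta> (length z) \<longleftrightarrow> a \<in> Sn (length a) \<and> pi_down \<Theta> a = z" by (rule Z_iff[OF Z(1)])
    have e2: "(b, w) \<in> \<Theta> (length w) \<longleftrightarrow> b \<in> Sn (length b) \<and> pi_down \<Theta> b = w" by (rule Z_iff[OF Z(2)])
    show "?G zw * of_bool ((a, fst zw) \<in> \<Theta> (length (fst zw)) \<and> (b, snd zw) \<in> \<Theta> (length (snd zw))) =
      (if zw = (pi_down \<Theta> a, pi_down \<Theta> b) then (if a \<in> Sn (length a) \<and> b \<in> Sn (length b) then ?G zw else 0) else 0)"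
      unfolding zw fst_conv snd_conv e1 e2 by auto
  qed
  also have "\<dots> = (if (pi_down \<Theta> a, pi_down \<Theta> b) \<in> supp ?G then
      (if a \<in> Sn (length a) \<and> b \<in> Sn (length b) then ?G (pi_down \<Theta> a, pi_down \<Theta> b) else 0) else 0)"
    by (rule sum.delta[OF finG])
  also have "\<dots> = (if a \<in> Sn (length a) \<and> b \<in> Sn (length b) then ?G (pi_down \<Theta> a, pi_down \<Theta> b) else 0)"
    unfolding supp_def by auto
  also have "\<dots> = ?DS (a, b)"
  proof (cases "a \<in> Sn (length a) \<and> b \<in> Sn (length b)")
    case False
    show ?thesis unfolding if_not_P[OF False] using DS_zero[OF f False] by simp
  next
    case True
    then have aS: "a \<in> Sn (length a)" and bS: "b \<in> Sn (length b)" by auto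
    define p where "p = length a"
    define q where "q = length b"
    have a': "a \<in> Sn p" and b': "b \<in> Sn q" using aS bS unfolding p_def q_def by auto
    have pa: "(pi_down \<Theta> a, a) \<in> \<Theta> p" using pi_down_props[OF aS] unfolding p_def by simp
    have pb: "(pi_down \<Theta> b, b) \<in> \<Theta> q" using pi_down_props[OF bS] unfolding q_def by simp
    have paS: "pi_down \<Theta> a \<in> Sn p" using th_Sn[OF pa] by blast
    have pbS: "pi_down \<Theta> b \<in> Sn q" using th_Sn[OF pb] by blast
    have Za: "pi_down \<Theta> a \<in> Zset \<Theta>" by (rule pi_down_Z[OF aS])
    have Zb: "pi_down \<Theta> b \<in> Zset \<Theta>" by (rule pi_down_Z[OF bS])
    have "?G (pi_down \<Theta> a, pi_down \<Theta> b) = ?DS (pi_down \<Theta> a, pi_down \<Theta> b)" using Gd Za Zb by simp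
    also have "\<dots> = (\<Sum>Q\<in>{Q. Q \<subseteq> {1..p + q} \<and> card Q = p}. f (pi_down \<Theta> (phi Q (pi_down \<Theta> a) (pi_down \<Theta> b))))"
      by (rule DS_phi[OF f paS pbS])
    also have "\<dots> = (\<Sum>Q\<in>{Q. Q \<subseteq> {1..p + q} \<and> card Q = p}. f (pi_down \<Theta> (phi Q a b)))"
    proof (rule sum.cong[OF refl])
      fix Q assume Q: "Q \<in> {Q. Q \<subseteq> {1..p + q} \<and> card Q = p}"
      have Q1: "Q \<subseteq> {1..p + q}" and Q2: "card Q = p" using Q by simp_all
      have c: "(phi Q a b, phi Q (pi_down \<Theta> a) (pi_down \<Theta> b)) \<in> \<Theta> (p + q)"
        using insl[unfolded insertional_def, rule_format, OF Q1 Q2 a' paS b' pbS th_sym[OF pa] th_sym[OF pb]] .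
      have "phi Q (pi_down \<Theta> a) (pi_down \<Theta> b) \<in> Sn (p + q)" using conjunct1[OF phi_props[OF Q1 Q2 paS pbS]] .
      then have "length (phi Q (pi_down \<Theta> a) (pi_down \<Theta> b)) = p + q" by (rule Sn_length)
      then have c': "(phi Q a b, phi Q (pi_down \<Theta> a) (pi_down \<Theta> b)) \<in> \<Theta> (length (phi Q (pi_down \<Theta> a) (pi_down \<Theta> b)))"
        using c by simp
      show "f (pi_down \<Theta> (phi Q (pi_down \<Theta> a) (pi_down \<Theta> b))) = f (pi_down \<Theta> (phi Q a b))"
        using pi_down_cong[OF c'] by simp
    qed
    also have "\<dots> = ?DS (a, b)" by (rule DS_phi[OF f a' b', symmetric])
    finally show ?thesis unfolding if_P[OF True] .
  qed
  finally show "?DS ab = cc_map \<Theta> ?G ab" unfolding ab by simp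
qed

end


context hfam
begin

lemma pi_nil: "pi_down \<Theta> [] = []"
proof -
  have nS: "([]::nat list) \<in> Sn (length ([]::nat list))" unfolding Sn_def by simp
  have "(pi_down \<Theta> [], []) \<in> \<Theta> (length ([]::nat list))" using conjunct1[OF pi_down_props[OF nS]] .
  then have "length (pi_down \<Theta> []) = 0" using th_len by fastforce
  then show ?thesis by simp
qed

lemma nil_Z: "[] \<in> Zset \<Theta>"
  unfolding Zset_def using pi_nil by (simp add: Sn_def)

lemma unit_KZ: "(unitK :: nat list \<Rightarrow> 'k::field) \<in> KZ \<Theta>"
proof -
  have "supp (unitK :: nat list \<Rightarrow> 'k) = {[]}" unfolding supp_def unitK_def by auto
  then show ?thesis unfolding KZ_def using nil_Z by simp
qed

lemma cmap_unit: "cmap \<Theta> (unitK :: nat list \<Rightarrow> 'k::field) = unitK"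
proof
  fix x
  show "cmap \<Theta> (unitK :: nat list \<Rightarrow> 'k) x = unitK x"
  proof (cases "x \<in> Sn (length x)")
    case False
    then have "x \<noteq> []" unfolding Sn_def by auto
    then show ?thesis using cmap_formula[OF unit_KZ, of x] False unfolding unitK_def by simp
  next
    case True
    have p: "(pi_down \<Theta> x, x) \<in> \<Theta> (length x)" using pi_down_props[OF True] by blast
    have "length (pi_down \<Theta> x) = length x" using conjunct1[OF th_len[OF p]] .
    then have "(pi_down \<Theta> x = []) = (x = [])" by auto
    then show ?thesis using cmap_formula[OF unit_KZ, of x] True unfolding unitK_def by simp
  qed
qed

lemma counit_eq: "f \<in> KZ \<Theta> \<Longrightarrow> counitK (cmap \<Theta> f :: nat list \<Rightarrow> 'k::field) = counitK f"
  unfolding counitK_def using cmap_formula[of f "[]"] pi_nil by (simp add: Sn_def)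

lemma cmap_inj: "inj_on (cmap \<Theta> :: (nat list \<Rightarrow> 'k::field) \<Rightarrow> _) (KZ \<Theta>)"
proof (rule inj_onI)
  fix f g :: "nat list \<Rightarrow> 'k"
  assume f: "f \<in> KZ \<Theta>" and g: "g \<in> KZ \<Theta>" and e: "cmap \<Theta> f = cmap \<Theta> g"
  show "f = g"
  proof
    fix x
    show "f x = g x"
    proof (cases "x \<in> Zset \<Theta>")
      case True
      have A: "cmap \<Theta> f x = f x" using cmap_formula[OF f, of x] Z_Sn[OF True] Z_fix[OF True] by simp
      have B: "cmap \<Theta> g x = g x" using cmap_formula[OF g, of x] Z_Sn[OF True] Z_fix[OF True] by simp
      have C: "cmap \<Theta> f x = cmap \<Theta> g x" using e by (rule fun_cong)
      show ?thesis by (rule trans[OF sym[OF A] trans[OF C B]])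
    next
      case False
      have "x \<notin> supp f" "x \<notin> supp g" using f g False unfolding KZ_def by auto
      then show ?thesis unfolding supp_def by simp
    qed
  qed
qed

end

theorem corollary1p4:
  fixes \<Theta> :: "nat \<Rightarrow> (nat list \<times> nat list) set"
  assumes "H_family \<Theta>"
  shows "inj_on (cmap \<Theta> :: (nat list \<Rightarrow> 'k::field) \<Rightarrow> _) (KZ \<Theta>)
    \<and> (\<forall>f\<in>KZ \<Theta>. (cmap \<Theta> f :: nat list \<Rightarrow> 'k) \<in> KS)
    \<and> (\<forall>f\<in>KZ \<Theta>. \<forall>g\<in>KZ \<Theta>. (cmap \<Theta> (mulZ \<Theta> f g) :: nat list \<Rightarrow> 'k)
           = mulS (cmap \<Theta> f) (cmap \<Theta> g))
    \<and> (\<forall>f\<in>KZ \<Theta>. (DeltaS (cmap \<Theta> f) :: nat list \<times> nat list \<Rightarrow> 'k)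
           = cc_map \<Theta> (DeltaZ \<Theta> f))
    \<and> (unitK :: nat list \<Rightarrow> 'k) \<in> KZ \<Theta> \<and> cmap \<Theta> (unitK :: nat list \<Rightarrow> 'k) = unitK
    \<and> (\<forall>f\<in>KZ \<Theta>. counitK (cmap \<Theta> f :: nat list \<Rightarrow> 'k) = counitK f)"
proof -
  interpret hfam \<Theta> by (rule hfam.intro) (rule assms)
  show ?thesis
    using cmap_inj cmap_KS prod_eq coprod_eq unit_KZ cmap_unit counit_eq by blast
qed

end
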